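(* Let $p\ge7$ be prime, $F$ a number field with $\mathbb{Q}(p)\subseteq F$, and $c_p\in G_{\mathbb{Q}}$ an element acting nontrivially on $\mathbb{Q}(p)$. Let $\overline\rho:G_F\to\mathrm{PGL}_2(\mathbb{F}_p)$ be a continuous homomorphism with cyclotomic determinant (so $\overline\rho$ takes values in $\mathrm{PSL}_2(\mathbb{F}_p)$). Then $X_{\overline\rho}(p)$ is defined over $\mathbb{Q}$ if and only if there exist $g\in\mathrm{PGL}_2(\mathbb{F}_p)\setminus\mathrm{PSL}_2(\mathbb{F}_p)$ and a homomorphism $\overline r:G_{\mathbb{Q}(p)}\to\mathrm{PSL}_2(\mathbb{F}_p)$ with $\overline r|_{G_F}=\overline\rho$, such that $\overline r(c_p^2)=g^2$ and $\overline r(c_p^{-1}\sigma c_p)=g^{-1}\overline r(\sigma)g$ for all $\sigma\in G_{\mathbb{Q}(p)}$.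
   Context: $G_K=\mathrm{Gal}(\overline{\mathbb{Q}}/K)$. $\mathbb{Q}(p)$ is the unique quadratic subfield of $\mathbb{Q}(\zeta_p)$. $\overline\varepsilon_p^{\mathrm{pr}}$ is the mod-$p$ cyclotomic character composed with $\mathbb{F}_p^\times\to\mathbb{F}_p^\times/\mathbb{F}_p^{\times2}$; determinants on $\mathrm{PGL}_2(\mathbb{F}_p)$ take values in $\mathbb{F}_p^\times/\mathbb{F}_p^{\times2}$ and $\mathrm{PSL}_2(\mathbb{F}_p)$ is the kernel; "cyclotomic determinant" means $\det\overline\rho=\overline\varepsilon_p^{\mathrm{pr}}$ on $G_F$. $\overline\rho^\vee(\sigma)=\overline\rho(\sigma^{-1})^t$. Fix a non-residue $v\in\mathbb{F}_p^\times$, $V=\begin{pmatrix}0&v\\-1&0\end{pmatrix}$, and let $X(p)$ be the model over $\mathbb{Q}$ of the principal modular curve of level $p$ given by the subgroup $\mathbb{F}_p^\times I\cup\mathbb{F}_p^\times V\subseteq\mathrm{GL}_2(\mathbb{F}_p)$; $\mathrm{Aut}_{\overline{\mathbb{Q}}}X(p)\cong\mathrm{PSL}_2(\mathbb{F}_p)$ with $G_{\mathbb{Q}}$ acting by $\sigma\cdot x=\eta(\sigma)x\eta(\sigma)^{-1}$, where $\eta(\sigma)=1$ if $\sigma$ fixes $\mathbb{Q}(p)$ and $\eta(\sigma)=V$ otherwise. $\xi(\sigma)=\overline\rho^\vee(\sigma)\eta(\sigma)$ is a $1$-cocycle $G_F\to\mathrm{PSL}_2(\mathbb{F}_p)$,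 $X_{\overline\rho}(p)$ is the corresponding twist of $X(p)$ over $F$, and it is "defined over $\mathbb{Q}$" if $[\xi]$ lies in the image of restriction $H^1(G_{\mathbb{Q}},\mathrm{PSL}_2(\mathbb{F}_p))\to H^1(G_F,\mathrm{PSL}_2(\mathbb{F}_p))$. *)

theory Defs
  imports "HOL-Algebra.Algebraic_Closure_Type" "HOL-Number_Theory.Number_Theory"
begin

type_synonym qbar = "rat alg_closure"

definition is_subfield :: "qbar set \<Rightarrow> bool" where
  "is_subfield K \<longleftrightarrow> 0 \<in> K \<and> 1 \<in> K \<and>
     (\<forall>x\<in>K. \<forall>y\<in>K. x + y \<in> K \<and> x - y \<in> K \<and> x * y \<in> K) \<and>
     (\<forall>x\<in>K. inverse x \<in> K)"

definition number_field :: "qbar set \<Rightarrow> bool" where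
  "number_field K \<longleftrightarrow> is_subfield K \<and>
     (\<exists>S. finite S \<and> K \<subseteq> {\<Sum>s\<in>S. of_rat (c s) * s | c. True})"

definition quadratic_field :: "qbar set \<Rightarrow> bool" where
  "quadratic_field K \<longleftrightarrow> is_subfield K \<and>
     (\<exists>a. a \<notin> \<rat> \<and> K = {of_rat x + of_rat y * a | x y. True})"

definition gen_field :: "qbar set \<Rightarrow> qbar set" where
  "gen_field S = \<Inter>{K. is_subfield K \<and> S \<subseteq> K}"

definition zeta :: "nat \<Rightarrow> qbar" where
  "zeta p = (SOME z. z ^ p = 1 \<and> z \<noteq> 1)"

definition cyclotomic_field :: "nat \<Rightarrow> qbar set" where
  "cyclotomic_field p = gen_field {zeta p}"

text \<open>Q(p): the unique quadratic subfield of Q(zeta_p).\<close>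
definition Qp :: "nat \<Rightarrow> qbar set" where
  "Qp p = (THE K. quadratic_field K \<and> K \<subseteq> cyclotomic_field p)"

definition GQ :: "(qbar \<Rightarrow> qbar) set" where
  "GQ = {\<sigma>. bij \<sigma> \<and> \<sigma> 1 = 1 \<and> (\<forall>x y. \<sigma> (x + y) = \<sigma> x + \<sigma> y \<and> \<sigma> (x * y) = \<sigma> x * \<sigma> y)}"

definition Gal :: "qbar set \<Rightarrow> (qbar \<Rightarrow> qbar) set" where
  "Gal K = {\<sigma> \<in> GQ. \<forall>x\<in>K. \<sigma> x = x}"

text \<open>Continuity (Krull topology on H, discrete target): locally constant, basic
  neighbourhoods of sigma being the sets of tau agreeing with sigma on a finite set.\<close>
definition krull_continuous :: "(qbar \<Rightarrow> qbar) set \<Rightarrow> ((qbar \<Rightarrow> qbar) \<Rightarrow> 'b) \<Rightarrow> bool" where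
  "krull_continuous H f \<longleftrightarrow> (\<forall>\<sigma>\<in>H. \<exists>S. finite S \<and>
      (\<forall>\<tau>\<in>H. (\<forall>x\<in>S. \<tau> x = \<sigma> x) \<longrightarrow> f \<tau> = f \<sigma>))"

definition cyc_char :: "nat \<Rightarrow> (qbar \<Rightarrow> qbar) \<Rightarrow> int" where
  "cyc_char p \<sigma> = (SOME a. a \<in> {1..<int p} \<and> \<sigma> (zeta p) = zeta p ^ nat a)"

type_synonym m2 = "int \<times> int \<times> int \<times> int"  (* (a,b,c,d) = [[a,b],[c,d]] *)

fun mmul :: "nat \<Rightarrow> m2 \<Rightarrow> m2 \<Rightarrow> m2" where
  "mmul p (a,b,c,d) (e,f,g,h) =
     ((a*e+b*g) mod int p, (a*f+b*h) mod int p, (c*e+d*g) mod int p, (c*f+d*h) mod int p)"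

fun mdet :: "nat \<Rightarrow> m2 \<Rightarrow> int" where
  "mdet p (a,b,c,d) = (a*d - b*c) mod int p"

fun smul :: "nat \<Rightarrow> int \<Rightarrow> m2 \<Rightarrow> m2" where
  "smul p l (a,b,c,d) = ((l*a) mod int p, (l*b) mod int p, (l*c) mod int p, (l*d) mod int p)"

fun madj :: "nat \<Rightarrow> m2 \<Rightarrow> m2" where
  "madj p (a,b,c,d) = (d mod int p, (-b) mod int p, (-c) mod int p, a mod int p)"

fun mtrans :: "m2 \<Rightarrow> m2" where
  "mtrans (a,b,c,d) = (a,c,b,d)"

definition GL2 :: "nat \<Rightarrow> m2 set" where
  "GL2 p = {(a,b,c,d). a \<in> {0..<int p} \<and> b \<in> {0..<int p} \<and> c \<in> {0..<int p} \<and>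
                       d \<in> {0..<int p} \<and> mdet p (a,b,c,d) \<noteq> 0}"

text \<open>An element of PGL_2(F_p) is the class of a matrix modulo nonzero scalars.\<close>
definition pcl :: "nat \<Rightarrow> m2 \<Rightarrow> m2 set" where
  "pcl p A = {smul p l A | l. l \<in> {1..<int p}}"

definition PGL2 :: "nat \<Rightarrow> m2 set set" where
  "PGL2 p = pcl p ` GL2 p"

definition rep :: "m2 set \<Rightarrow> m2" where
  "rep M = (SOME A. A \<in> M)"

definition pmul :: "nat \<Rightarrow> m2 set \<Rightarrow> m2 set \<Rightarrow> m2 set" where
  "pmul p M N = pcl p (mmul p (rep M) (rep N))"

definition pone :: "nat \<Rightarrow> m2 set" where
  "pone p = pcl p (1, 0, 0, 1)"

definition pinv :: "nat \<Rightarrow> m2 set \<Rightarrow> m2 set" where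
  "pinv p M = pcl p (madj p (rep M))"

definition ptrans :: "nat \<Rightarrow> m2 set \<Rightarrow> m2 set" where
  "ptrans p M = pcl p (mtrans (rep M))"

text \<open>PSL_2(F_p): kernel of det : PGL_2(F_p) \<rightarrow> F_p^*/F_p^*2.\<close>
definition PSL2 :: "nat \<Rightarrow> m2 set set" where
  "PSL2 p = {M \<in> PGL2 p. QuadRes (int p) (mdet p (rep M))}"

definition Vmat :: "nat \<Rightarrow> int \<Rightarrow> m2 set" where
  "Vmat p v = pcl p (0, v mod int p, (-1) mod int p, 0)"

definition eta :: "nat \<Rightarrow> int \<Rightarrow> (qbar \<Rightarrow> qbar) \<Rightarrow> m2 set" where
  "eta p v \<sigma> = (if \<sigma> \<in> Gal (Qp p) then pone p else Vmat p v)"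

text \<open>Galois action on Aut M(p) = PSL_2(F_p): x \<mapsto> eta(sigma) x eta(sigma)^-1.\<close>
definition gact :: "nat \<Rightarrow> int \<Rightarrow> (qbar \<Rightarrow> qbar) \<Rightarrow> m2 set \<Rightarrow> m2 set" where
  "gact p v \<sigma> x = pmul p (pmul p (eta p v \<sigma>) x) (pinv p (eta p v \<sigma>))"

definition rho_dual :: "nat \<Rightarrow> ((qbar \<Rightarrow> qbar) \<Rightarrow> m2 set) \<Rightarrow> (qbar \<Rightarrow> qbar) \<Rightarrow> m2 set" where
  "rho_dual p \<rho> \<sigma> = ptrans p (\<rho> (inv_into UNIV \<sigma>))"

definition xi :: "nat \<Rightarrow> int \<Rightarrow> ((qbar \<Rightarrow> qbar) \<Rightarrow> m2 set) \<Rightarrow> (qbar \<Rightarrow> qbar) \<Rightarrow> m2 set" where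
  "xi p v \<rho> \<sigma> = pmul p (rho_dual p \<rho> \<sigma>) (eta p v \<sigma>)"

definition cocycle :: "nat \<Rightarrow> int \<Rightarrow> (qbar \<Rightarrow> qbar) set \<Rightarrow> ((qbar \<Rightarrow> qbar) \<Rightarrow> m2 set) \<Rightarrow> bool" where
  "cocycle p v H z \<longleftrightarrow> krull_continuous H z \<and> (\<forall>\<sigma>\<in>H. z \<sigma> \<in> PSL2 p) \<and>
     (\<forall>\<sigma>\<in>H. \<forall>\<tau>\<in>H. z (\<sigma> \<circ> \<tau>) = pmul p (z \<sigma>) (gact p v \<sigma> (z \<tau>)))"

definition cohomologous :: "nat \<Rightarrow> int \<Rightarrow> (qbar \<Rightarrow> qbar) set \<Rightarrow> ((qbar \<Rightarrow> qbar) \<Rightarrow> m2 set)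
     \<Rightarrow> ((qbar \<Rightarrow> qbar) \<Rightarrow> m2 set) \<Rightarrow> bool" where
  "cohomologous p v H z w \<longleftrightarrow> (\<exists>b\<in>PSL2 p. \<forall>\<sigma>\<in>H.
       w \<sigma> = pmul p (pmul p (pinv p b) (z \<sigma>)) (gact p v \<sigma> b))"

text \<open>X_rho(p) defined over Q: [xi] lies in the image of restriction
  H^1(G_Q, PSL_2) \<rightarrow> H^1(G_F, PSL_2).\<close>
definition defined_over_Q :: "nat \<Rightarrow> int \<Rightarrow> qbar set \<Rightarrow> ((qbar \<Rightarrow> qbar) \<Rightarrow> m2 set) \<Rightarrow> bool" where
  "defined_over_Q p v F \<rho> \<longleftrightarrow> (\<exists>z. cocycle p v GQ z \<and> cohomologous p v (Gal F) z (xi p v \<rho>))"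

end

theory Submission
  imports Defs
begin



lemma modlin: "(i * (x mod q) + k * (y mod q)) mod q = (i * x + k * y) mod (q::int)"
  by (metis mod_add_eq mod_mult_right_eq)

lemma modlin2: "((x mod q) * i + (y mod q) * k) mod q = (x * i + y * k) mod (q::int)"
  by (metis mod_add_eq mod_mult_left_eq)

lemma modprod: "((x mod q) * (y mod q) + (z mod q) * (w mod q)) mod q = (x * y + z * w) mod (q::int)"
  by (metis mod_add_eq mod_mult_eq)

lemma moddet: "((x mod q) * (y mod q) - (z mod q) * (w mod q)) mod q = (x * y - z * w) mod (q::int)"
  by (metis mod_diff_eq mod_mult_eq)

lemma smul_smul: "smul p l (smul p m A) = smul p (l*m) A"
  by (cases A) (simp add: mod_mult_right_eq mult.assoc)

lemma mmul_assoc: "mmul p (mmul p A B) C = mmul p A (mmul p B C)"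
proof -
  obtain a b c d where A: "A = (a,b,c,d)" by (cases A) auto
  obtain e f g h where B: "B = (e,f,g,h)" by (cases B) auto
  obtain i j k l where C: "C = (i,j,k,l)" by (cases C) auto
  show ?thesis unfolding A B C
    apply (simp only: mmul.simps modlin modlin2)
    apply (simp add: algebra_simps)
    done
qed



definition I2 :: m2 where "I2 = (1,0,0,1)"

lemma prime_gt1_int: "prime p \<Longrightarrow> int p > 1"
  using prime_gt_1_nat by auto

lemma smul_mod_l: "smul p (l mod int p) A = smul p l A"
  by (cases A) (simp add: mod_mult_left_eq)

lemma unit_mult_mod:
  assumes "prime p" "\<not> int p dvd l" "\<not> int p dvd m"
  shows "(l*m) mod int p \<in> {1..<int p}"
proof -
  have pp: "prime (int p)" using assms by simp
  have "\<not> int p dvd l*m" using assms pp prime_dvd_mult_iff by blast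
  hence "(l*m) mod int p \<noteq> 0" by auto
  moreover have "(l*m) mod int p \<ge> 0" "(l*m) mod int p < int p" using prime_gt1_int[OF assms(1)] by auto
  ultimately show ?thesis by auto
qed

lemma range_not_dvd: "l \<in> {1..<int p} \<Longrightarrow> \<not> int p dvd l"
  using zdvd_imp_le by fastforce

lemma mod_inverse_ex:
  assumes "prime p" "\<not> int p dvd l"
  shows "\<exists>l'. (l * l') mod int p = 1 \<and> \<not> int p dvd l'"
proof -
  have pp: "prime (int p)" using assms by simp
  have "coprime l (int p)" using prime_imp_coprime[OF pp assms(2)] by (simp add: ac_simps)
  then obtain x where x: "[l * x = 1] (mod int p)" using cong_solve_coprime_int by blast
  hence "(l * x) mod int p = 1" using prime_gt1_int[OF assms(1)] by (simp add: cong_def)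
  moreover have "\<not> int p dvd x"
  proof
    assume "int p dvd x" hence "int p dvd l*x" by simp
    hence "(l*x) mod int p = 0" by simp
    with \<open>(l * x) mod int p = 1\<close> show False by simp
  qed
  ultimately show ?thesis by blast
qed

lemma pcl_smul:
  assumes "prime p" "\<not> int p dvd l"
  shows "pcl p (smul p l A) = pcl p A"
proof
  show "pcl p (smul p l A) \<subseteq> pcl p A"
  proof
    fix x assume "x \<in> pcl p (smul p l A)"
    then obtain m where m: "m \<in> {1..<int p}" "x = smul p m (smul p l A)" unfolding pcl_def by blast
    have "x = smul p ((m*l) mod int p) A" using m by (simp add: smul_smul smul_mod_l)
    moreover have "(m*l) mod int p \<in> {1..<int p}"
      using unit_mult_mod[OF assms(1) range_not_dvd[OF m(1)] assms(2)] .
    ultimately show "x \<in> pcl p A" unfolding pcl_def by blast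
  qed
next
  show "pcl p A \<subseteq> pcl p (smul p l A)"
  proof
    fix x assume "x \<in> pcl p A"
    then obtain m where m: "m \<in> {1..<int p}" "x = smul p m A" unfolding pcl_def by blast
    obtain l' where l': "(l * l') mod int p = 1" "\<not> int p dvd l'" using mod_inverse_ex[OF assms] by blast
    have "smul p ((m*l') mod int p) (smul p l A) = smul p (m*l'*l) A"
      by (metis smul_smul smul_mod_l mod_mult_left_eq)
    also have "\<dots> = smul p ((m*(l*l' mod int p)) mod int p) A"
      by (metis (no_types, lifting) mod_mult_right_eq mult.assoc mult.commute smul_mod_l)
    also have "\<dots> = x" using l' m by (simp add: smul_mod_l)
    finally show "x \<in> pcl p (smul p l A)" unfolding pcl_def
      using unit_mult_mod[OF assms(1) range_not_dvd[OF m(1)] l'(2)] by blast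
  qed
qed

lemma smul_in_pcl: "prime p \<Longrightarrow> smul p 1 A \<in> pcl p A"
proof -
  assume "prime p"
  hence "(1::int) \<in> {1..<int p}" using prime_gt1_int by simp
  thus ?thesis unfolding pcl_def by blast
qed

lemma pcl_red: "prime p \<Longrightarrow> pcl p (smul p 1 A) = pcl p A"
  by (rule pcl_smul) (auto simp: prime_gt1_int zdvd_not_zless)

lemma rep_pcl: "prime p \<Longrightarrow> \<exists>l\<in>{1..<int p}. rep (pcl p A) = smul p l A"
proof -
  assume "prime p"
  hence "rep (pcl p A) \<in> pcl p A" unfolding rep_def using smul_in_pcl by (metis someI)
  thus ?thesis unfolding pcl_def by blast
qed

lemma mmul_smul: "mmul p (smul p l A) (smul p m B) = smul p (l*m) (mmul p A B)"
proof -
  obtain a b c d where A: "A = (a,b,c,d)" by (cases A) auto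
  obtain e f g h where B: "B = (e,f,g,h)" by (cases B) auto
  show ?thesis unfolding A B
    apply (simp only: mmul.simps smul.simps modprod mod_mult_right_eq)
    apply (simp add: algebra_simps)
    done
qed

lemma pmul_pcl: "prime p \<Longrightarrow> pmul p (pcl p A) (pcl p B) = pcl p (mmul p A B)"
proof -
  assume pr: "prime p"
  obtain l where l: "l\<in>{1..<int p}" "rep (pcl p A) = smul p l A" using rep_pcl[OF pr] by blast
  obtain m where m: "m\<in>{1..<int p}" "rep (pcl p B) = smul p m B" using rep_pcl[OF pr] by blast
  have "\<not> int p dvd l*m"
    using pr range_not_dvd[OF l(1)] range_not_dvd[OF m(1)] prime_dvd_mult_iff[of "int p"] by auto
  thus ?thesis unfolding pmul_def l m mmul_smul using pcl_smul[OF pr] by simp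
qed

lemma madj_smul: "madj p (smul p l A) = smul p l (madj p A)"
  by (cases A) (simp add: mod_minus_eq mod_mult_right_eq)

lemma pinv_pcl: "prime p \<Longrightarrow> pinv p (pcl p A) = pcl p (madj p A)"
proof -
  assume pr: "prime p"
  obtain l where l: "l\<in>{1..<int p}" "rep (pcl p A) = smul p l A" using rep_pcl[OF pr] by blast
  show ?thesis unfolding pinv_def l madj_smul using pcl_smul[OF pr range_not_dvd[OF l(1)]] by simp
qed

lemma mtrans_smul: "mtrans (smul p l A) = smul p l (mtrans A)"
  by (cases A) simp

lemma ptrans_pcl: "prime p \<Longrightarrow> ptrans p (pcl p A) = pcl p (mtrans A)"
proof -
  assume pr: "prime p"
  obtain l where l: "l\<in>{1..<int p}" "rep (pcl p A) = smul p l A" using rep_pcl[OF pr] by blast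
  show ?thesis unfolding ptrans_def l mtrans_smul using pcl_smul[OF pr range_not_dvd[OF l(1)]] by simp
qed

lemma mmul_I2_left: "mmul p I2 A = smul p 1 A"
  by (cases A) (simp add: I2_def)

lemma mmul_madj_left: "mmul p (madj p A) A = smul p (mdet p A) I2"
proof -
  obtain a b c d where A: "A = (a,b,c,d)" by (cases A) auto
  show ?thesis unfolding A I2_def
    apply (simp only: mmul.simps smul.simps madj.simps mdet.simps modlin modlin2)
    apply (simp add: algebra_simps)
    done
qed

lemma mdet_mmul: "mdet p (mmul p A B) = (mdet p A * mdet p B) mod int p"
proof -
  obtain a b c d where A: "A = (a,b,c,d)" by (cases A) auto
  obtain e f g h where B: "B = (e,f,g,h)" by (cases B) auto
  have "((a * e + b * g) mod int p * ((c * f + d * h) mod int p) -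
        (a * f + b * h) mod int p * ((c * e + d * g) mod int p)) mod int p
       = ((a * e + b * g) * (c * f + d * h) - (a * f + b * h) * (c * e + d * g)) mod int p"
    by (rule moddet)
  also have "\<dots> = ((a*d-b*c)*(e*h-f*g)) mod int p" by (simp add: algebra_simps)
  also have "\<dots> = ((a*d-b*c) mod int p * ((e*h-f*g) mod int p)) mod int p" by (metis mod_mult_eq)
  finally show ?thesis unfolding A B by simp
qed

lemma mdet_madj: "mdet p (madj p A) = mdet p A"
proof -
  obtain a b c d where A: "A = (a,b,c,d)" by (cases A) auto
  have "(d mod int p * (a mod int p) - (- b) mod int p * ((- c) mod int p)) mod int p
      = (d * a - (-b) * (-c)) mod int p" by (rule moddet)
  thus ?thesis unfolding A by (simp add: algebra_simps)
qed

lemma mdet_mtrans: "mdet p (mtrans A) = mdet p A"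
  by (cases A) (simp add: algebra_simps)

lemma mdet_smul: "mdet p (smul p l A) = (l*l*mdet p A) mod int p"
proof -
  obtain a b c d where A: "A = (a,b,c,d)" by (cases A) auto
  have "mdet p (smul p l A) = ((l*a) * (l*d) - (l*b) * (l*c)) mod int p"
    unfolding A smul.simps mdet.simps by (rule moddet)
  also have "\<dots> = (l*l*(a*d-b*c)) mod int p" by (simp add: algebra_simps)
  also have "\<dots> = (l*l*((a*d-b*c) mod int p)) mod int p" by (simp add: mod_mult_right_eq)
  finally show ?thesis unfolding A by simp
qed

lemma GL2_iff: "(a,b,c,d) \<in> GL2 p \<longleftrightarrow> a \<in> {0..<int p} \<and> b \<in> {0..<int p} \<and> c \<in> {0..<int p} \<and>
                       d \<in> {0..<int p} \<and> mdet p (a,b,c,d) \<noteq> 0"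
  unfolding GL2_def by auto

definition redm :: "nat \<Rightarrow> m2 \<Rightarrow> bool" where
  "redm p A \<longleftrightarrow> smul p 1 A = A"

lemma GL2_redm: "A \<in> GL2 p \<Longrightarrow> smul p 1 A = A \<and> mdet p A \<noteq> 0"
  by (cases A) (auto simp: GL2_iff)

lemma GL2_I: "smul p 1 A = A \<Longrightarrow> mdet p A \<noteq> 0 \<Longrightarrow> p > 0 \<Longrightarrow> A \<in> GL2 p"
proof -
  assume h: "smul p 1 A = A" "mdet p A \<noteq> 0" "p > 0"
  obtain a b c d where A: "A = (a,b,c,d)" by (cases A) auto
  have r: "x mod int p \<in> {0..<int p}" for x using h(3) by simp
  have "a = a mod int p" "b = b mod int p" "c = c mod int p" "d = d mod int p"
    using h(1) unfolding A by simp_all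
  thus ?thesis using r h(2) unfolding A GL2_iff by metis
qed

lemma mdet_nz_mult: "prime p \<Longrightarrow> mdet p A \<noteq> 0 \<Longrightarrow> mdet p B \<noteq> 0 \<Longrightarrow> mdet p (mmul p A B) \<noteq> 0"
proof -
  assume pr: "prime p" and a: "mdet p A \<noteq> 0" and b: "mdet p B \<noteq> 0"
  have "\<not> int p dvd mdet p A" using a by (cases A) (auto simp: dvd_eq_mod_eq_0)
  moreover have "\<not> int p dvd mdet p B" using b by (cases B) (auto simp: dvd_eq_mod_eq_0)
  ultimately have "\<not> int p dvd mdet p A * mdet p B" using pr prime_dvd_mult_iff[of "int p"] by auto
  thus ?thesis by (simp add: mdet_mmul dvd_eq_mod_eq_0)
qed

lemma smul1_mmul: "smul p 1 (mmul p A B) = mmul p A B"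
  by (cases A; cases B) simp

lemma smul1_madj: "smul p 1 (madj p A) = madj p A"
  by (cases A) simp

lemma smul1_smul: "smul p 1 (smul p l A) = smul p l A"
  by (cases A) simp

lemma mmul_GL2: "prime p \<Longrightarrow> A \<in> GL2 p \<Longrightarrow> B \<in> GL2 p \<Longrightarrow> mmul p A B \<in> GL2 p"
  by (rule GL2_I) (use mdet_nz_mult GL2_redm prime_gt_0_nat smul1_mmul in blast)+

lemma madj_GL2: "prime p \<Longrightarrow> A \<in> GL2 p \<Longrightarrow> madj p A \<in> GL2 p"
  by (rule GL2_I) (auto simp: smul1_madj mdet_madj dest!: GL2_redm intro: prime_gt_0_nat)

lemma mtrans_GL2: "A \<in> GL2 p \<Longrightarrow> mtrans A \<in> GL2 p"
  by (cases A) (auto simp: GL2_iff algebra_simps)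

lemma I2_GL2: "prime p \<Longrightarrow> I2 \<in> GL2 p"
  using prime_gt1_int[of p] by (auto simp: GL2_iff I2_def)


declare mmul.simps[simp del] smul.simps[simp del] madj.simps[simp del] mdet.simps[simp del] mtrans.simps[simp del]


lemma QR_cong: "QuadRes m x \<longleftrightarrow> (\<exists>y. y^2 mod m = x mod m)"
  unfolding QuadRes_def cong_def by simp

lemma QR_mod: "QuadRes m (x mod m) \<longleftrightarrow> QuadRes m x"
  unfolding QR_cong by simp

lemma QR_mult: "QuadRes m x \<Longrightarrow> QuadRes m y \<Longrightarrow> QuadRes m (x*y)"
proof -
  assume "QuadRes m x" "QuadRes m y"
  then obtain a b where a: "a^2 mod m = x mod m" and b: "b^2 mod m = y mod m" unfolding QR_cong by blast
  have "(a*b)^2 mod m = (a^2 * b^2) mod m" by (simp add: power_mult_distrib)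
  also have "\<dots> = ((a^2 mod m) * (b^2 mod m)) mod m" by (simp add: mod_mult_eq)
  also have "\<dots> = (x*y) mod m" using a b by (simp add: mod_mult_eq)
  finally show ?thesis unfolding QR_cong by blast
qed

lemma QR_sq:
  assumes "prime p" "\<not> int p dvd l"
  shows "QuadRes (int p) (l*l*x) \<longleftrightarrow> QuadRes (int p) x"
proof
  assume "QuadRes (int p) x"
  moreover have "QuadRes (int p) (l*l)" unfolding QR_cong by (rule exI[of _ l]) (simp add: power2_eq_square)
  ultimately show "QuadRes (int p) (l*l*x)" using QR_mult by blast
next
  assume h: "QuadRes (int p) (l*l*x)"
  obtain l' where l': "(l * l') mod int p = 1" "\<not> int p dvd l'" using mod_inverse_ex[OF assms] by blast
  have "QuadRes (int p) (l'*l'*(l*l*x))"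
    using QR_mult[OF _ h, of "l'*l'"] unfolding QR_cong by (metis power2_eq_square)
  moreover have "(l'*l'*(l*l*x)) mod int p = x mod int p"
  proof -
    have u: "[l*l' = 1] (mod int p)" using l' prime_gt1_int[OF assms(1)] by (simp add: cong_def)
    have "[(l*l')*(l*l')*x = 1*1*x] (mod int p)" by (intro cong_mult u cong_refl)
    hence "[l'*l'*(l*l*x) = x] (mod int p)" by (simp add: ac_simps)
    thus ?thesis by (simp add: cong_def)
  qed
  ultimately show "QuadRes (int p) x" by (metis QR_mod)
qed

lemma QR_nonres_mult:
  assumes "prime p" "2 < p" "\<not> int p dvd x" "\<not> int p dvd y"
    "\<not> QuadRes (int p) x" "\<not> QuadRes (int p) y"
  shows "QuadRes (int p) (x*y)"
proof -
  let ?k = "(p - 1) div 2"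
  have nx: "\<not> [x = 0] (mod int p)" using assms(3) by (simp add: cong_0_iff)
  have ny: "\<not> [y = 0] (mod int p)" using assms(4) by (simp add: cong_0_iff)
  have pp: "prime (int p)" using assms by simp
  have nxy: "\<not> [x*y = 0] (mod int p)" using assms(3,4) pp prime_dvd_mult_iff[of "int p"]
    by (simp add: cong_0_iff)
  have ex: "[-1 = x ^ ?k] (mod int p)"
    using euler_criterion[OF assms(1,2), of x] nx assms(5) by (simp add: Legendre_def)
  have ey: "[-1 = y ^ ?k] (mod int p)"
    using euler_criterion[OF assms(1,2), of y] ny assms(6) by (simp add: Legendre_def)
  have "[(-1)*(-1) = x ^ ?k * y ^ ?k] (mod int p)" using cong_mult[OF ex ey] .
  hence e1: "[1 = (x*y) ^ ?k] (mod int p)" by (simp add: power_mult_distrib)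
  have el: "[Legendre (x*y) (int p) = (x*y) ^ ?k] (mod int p)" using euler_criterion[OF assms(1,2)] .
  have "[Legendre (x*y) (int p) = 1] (mod int p)" using el e1 cong_sym cong_trans by blast
  moreover have "\<not> [-1 = (1::int)] (mod int p)"
  proof
    assume "[-1 = (1::int)] (mod int p)"
    hence "int p dvd 2" by (simp add: cong_iff_dvd_diff)
    hence "int p \<le> 2" using zdvd_imp_le by fastforce
    with assms(2) show False by simp
  qed
  ultimately show ?thesis using nxy unfolding Legendre_def by (auto split: if_splits)
qed

definition PG :: "nat \<Rightarrow> m2 set monoid" where
  "PG p = \<lparr>carrier = PGL2 p, monoid.mult = pmul p, one = pone p\<rparr>"

lemma PG_simps [simp]: "carrier (PG p) = PGL2 p" "monoid.mult (PG p) = pmul p" "one (PG p) = pone p"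
  by (simp_all add: PG_def)

lemma PGL2_E: "M \<in> PGL2 p \<Longrightarrow> (\<And>A. A \<in> GL2 p \<Longrightarrow> M = pcl p A \<Longrightarrow> Q) \<Longrightarrow> Q"
  unfolding PGL2_def by blast

lemma pcl_PGL2: "A \<in> GL2 p \<Longrightarrow> pcl p A \<in> PGL2 p"
  unfolding PGL2_def by blast

lemma pone_I2: "pone p = pcl p I2" unfolding pone_def I2_def by simp

lemma mdet_mod: "mdet p A mod int p = mdet p A"
  by (cases A) (simp add: mdet.simps)

lemma mdet_not_dvd: "A \<in> GL2 p \<Longrightarrow> \<not> int p dvd mdet p A"
  by (metis GL2_redm dvd_eq_mod_eq_0 mdet_mod)

lemma group_PG: assumes pr: "prime p" shows "group (PG p)"
proof (rule groupI)
  fix x y assume "x \<in> carrier (PG p)" "y \<in> carrier (PG p)"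
  then show "x \<otimes>\<^bsub>PG p\<^esub> y \<in> carrier (PG p)"
    by (auto elim!: PGL2_E simp: pmul_pcl[OF pr] intro!: pcl_PGL2 mmul_GL2[OF pr])
next
  show "\<one>\<^bsub>PG p\<^esub> \<in> carrier (PG p)" using I2_GL2[OF pr] by (simp add: pone_I2 pcl_PGL2)
next
  fix x y z assume "x \<in> carrier (PG p)" "y \<in> carrier (PG p)" "z \<in> carrier (PG p)"
  then show "x \<otimes>\<^bsub>PG p\<^esub> y \<otimes>\<^bsub>PG p\<^esub> z = x \<otimes>\<^bsub>PG p\<^esub> (y \<otimes>\<^bsub>PG p\<^esub> z)"
    by (auto elim!: PGL2_E simp: pmul_pcl[OF pr] mmul_assoc)
next
  fix x assume "x \<in> carrier (PG p)"
  then show "\<one>\<^bsub>PG p\<^esub> \<otimes>\<^bsub>PG p\<^esub> x = x"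
    by (auto elim!: PGL2_E simp: pmul_pcl[OF pr] pone_I2 mmul_I2_left pcl_red[OF pr])
next
  fix x assume "x \<in> carrier (PG p)"
  then obtain A where A: "A \<in> GL2 p" "x = pcl p A" by (auto elim: PGL2_E)
  have "pmul p (pcl p (madj p A)) (pcl p A) = pone p"
    unfolding pmul_pcl[OF pr] mmul_madj_left pone_I2 using pcl_smul[OF pr mdet_not_dvd[OF A(1)]] .
  moreover have "pcl p (madj p A) \<in> carrier (PG p)" using madj_GL2[OF pr A(1)] by (simp add: pcl_PGL2)
  ultimately show "\<exists>y\<in>carrier (PG p). y \<otimes>\<^bsub>PG p\<^esub> x = \<one>\<^bsub>PG p\<^esub>" using A by auto
qed

lemma inv_PG: assumes pr: "prime p" and M: "M \<in> PGL2 p" shows "inv\<^bsub>PG p\<^esub> M = pinv p M"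
proof -
  interpret group "PG p" by (rule group_PG[OF pr])
  obtain A where A: "A \<in> GL2 p" "M = pcl p A" using M by (auto elim: PGL2_E)
  have "pmul p (pcl p (madj p A)) (pcl p A) = pone p"
    unfolding pmul_pcl[OF pr] mmul_madj_left pone_I2 using pcl_smul[OF pr mdet_not_dvd[OF A(1)]] .
  moreover have "pcl p (madj p A) \<in> carrier (PG p)" using madj_GL2[OF pr A(1)] by (simp add: pcl_PGL2)
  ultimately show ?thesis using A inv_equality[of "pcl p (madj p A)" M] by (simp add: pinv_pcl[OF pr] pcl_PGL2)
qed

lemma PSL2_pcl: assumes pr: "prime p" and A: "A \<in> GL2 p"
  shows "pcl p A \<in> PSL2 p \<longleftrightarrow> QuadRes (int p) (mdet p A)"
proof -
  obtain l where l: "l\<in>{1..<int p}" "rep (pcl p A) = smul p l A" using rep_pcl[OF pr] by blast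
  have "QuadRes (int p) (mdet p (rep (pcl p A))) \<longleftrightarrow> QuadRes (int p) (l*l*mdet p A)"
    unfolding l mdet_smul QR_mod ..
  also have "\<dots> \<longleftrightarrow> QuadRes (int p) (mdet p A)" using QR_sq[OF pr range_not_dvd[OF l(1)]] .
  finally show ?thesis unfolding PSL2_def using pcl_PGL2[OF A] by simp
qed

lemma PSL2_sub: "PSL2 p \<subseteq> PGL2 p" unfolding PSL2_def by auto

lemma subgroup_PSL2: assumes pr: "prime p" shows "subgroup (PSL2 p) (PG p)"
proof -
  interpret group "PG p" by (rule group_PG[OF pr])
  show ?thesis
  proof (rule subgroupI)
    show "PSL2 p \<subseteq> carrier (PG p)" using PSL2_sub by simp
    have "QuadRes (int p) (mdet p I2)" unfolding QR_cong I2_def by (rule exI[of _ 1]) (simp add: mdet.simps)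
    hence "pone p \<in> PSL2 p" unfolding pone_I2 using PSL2_pcl[OF pr I2_GL2[OF pr]] by simp
    thus "PSL2 p \<noteq> {}" by auto
  next
    fix a assume a: "a \<in> PSL2 p"
    have "a \<in> PGL2 p" using a PSL2_sub by blast
    then obtain A where A: "A \<in> GL2 p" "a = pcl p A" by (rule PGL2_E)
    have "QuadRes (int p) (mdet p A)" using a A PSL2_pcl[OF pr] by simp
    hence "pcl p (madj p A) \<in> PSL2 p" using PSL2_pcl[OF pr madj_GL2[OF pr A(1)]] by (simp add: mdet_madj)
    thus "inv\<^bsub>PG p\<^esub> a \<in> PSL2 p" using inv_PG[OF pr] A pinv_pcl[OF pr] pcl_PGL2 by simp
  next
    fix a b assume a: "a \<in> PSL2 p" and b: "b \<in> PSL2 p"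
    have "a \<in> PGL2 p" "b \<in> PGL2 p" using a b PSL2_sub by blast+
    then obtain A B where A: "A \<in> GL2 p" "a = pcl p A" and B: "B \<in> GL2 p" "b = pcl p B"
      by (metis PGL2_E)
    have "QuadRes (int p) (mdet p A)" "QuadRes (int p) (mdet p B)" using a b A B PSL2_pcl[OF pr] by simp_all
    hence "QuadRes (int p) (mdet p (mmul p A B))" unfolding mdet_mmul QR_mod by (rule QR_mult)
    thus "a \<otimes>\<^bsub>PG p\<^esub> b \<in> PSL2 p" using A B PSL2_pcl[OF pr mmul_GL2[OF pr A(1) B(1)]] by (simp add: pmul_pcl[OF pr])
  qed
qed

lemma nonPSL2_mult:
  assumes pr: "prime p" and p2: "2 < p" and a: "a \<in> PGL2 p - PSL2 p" and b: "b \<in> PGL2 p - PSL2 p"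
  shows "pmul p a b \<in> PSL2 p"
proof -
  obtain A where A: "A \<in> GL2 p" "a = pcl p A" using a by (auto elim: PGL2_E)
  obtain B where B: "B \<in> GL2 p" "b = pcl p B" using b by (auto elim: PGL2_E)
  have "\<not> QuadRes (int p) (mdet p A)" "\<not> QuadRes (int p) (mdet p B)" using a b A B PSL2_pcl[OF pr] by auto
  hence "QuadRes (int p) (mdet p A * mdet p B)"
    using QR_nonres_mult[OF pr p2 mdet_not_dvd[OF A(1)] mdet_not_dvd[OF B(1)]] by blast
  hence "QuadRes (int p) (mdet p (mmul p A B))" unfolding mdet_mmul QR_mod .
  thus ?thesis using A B PSL2_pcl[OF pr mmul_GL2[OF pr A(1) B(1)]] by (simp add: pmul_pcl[OF pr])
qed


definition J0 :: "nat \<Rightarrow> m2" where "J0 p = (0, 1, int p - 1, 0)"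
definition Jm :: "nat \<Rightarrow> m2 set" where "Jm p = pcl p (J0 p)"

lemma J0_GL2: "prime p \<Longrightarrow> J0 p \<in> GL2 p"
  using prime_gt1_int[of p] by (auto simp: J0_def GL2_iff mdet.simps)

lemma J0_det: "prime p \<Longrightarrow> mdet p (J0 p) = 1"
  using prime_gt1_int[of p] by (simp add: J0_def mdet.simps)

lemma Jm_PSL2: "prime p \<Longrightarrow> Jm p \<in> PSL2 p"
proof -
  assume pr: "prime p"
  have "QuadRes (int p) 1" unfolding QR_cong by (rule exI[of _ 1]) simp
  thus ?thesis unfolding Jm_def using PSL2_pcl[OF pr J0_GL2[OF pr]] J0_det[OF pr] by simp
qed

lemma transp_identity:
  assumes pr: "prime p" and A: "A \<in> GL2 p"
  shows "mmul p (mmul p (J0 p) A) (madj p (J0 p)) = mtrans (madj p A)"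
proof -
  obtain a b c d where Ad: "A = (a,b,c,d)" by (cases A) auto
  show ?thesis unfolding Ad J0_def
    apply (simp only: mmul.simps madj.simps mtrans.simps modprod prod.inject)
    apply (intro conjI; simp only: mod_eq_dvd_iff; simp add: algebra_simps)
    done
qed

lemma ptrans_pinv:
  assumes pr: "prime p" and M: "M \<in> PGL2 p"
  shows "ptrans p (pinv p M) = pmul p (pmul p (Jm p) M) (pinv p (Jm p))"
proof -
  obtain A where A: "A \<in> GL2 p" "M = pcl p A" using M by (rule PGL2_E)
  show ?thesis unfolding A Jm_def pinv_pcl[OF pr] ptrans_pcl[OF pr] pmul_pcl[OF pr]
    transp_identity[OF pr A(1)] ..
qed

definition V0 :: "nat \<Rightarrow> int \<Rightarrow> m2" where "V0 p v = (0, v mod int p, (-1) mod int p, 0)"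

lemma Vmat_V0: "Vmat p v = pcl p (V0 p v)" unfolding Vmat_def V0_def ..

lemma V0_det: assumes "prime p" "v \<in> {1..<int p}" shows "mdet p (V0 p v) = v"
proof -
  have P: "int p > 1" using prime_gt1_int[OF assms(1)] .
  have "(-(v*(int p - 1))) mod int p = v mod int p" by (simp only: mod_eq_dvd_iff) (simp add: algebra_simps)
  thus ?thesis using assms(2) P by (simp add: V0_def mdet.simps zmod_minus1)
qed

lemma V0_GL2: assumes "prime p" "v \<in> {1..<int p}" shows "V0 p v \<in> GL2 p"
proof -
  have P: "int p > 1" using prime_gt1_int[OF assms(1)] .
  have "mdet p (V0 p v) = v" using V0_det assms by blast
  thus ?thesis using assms(2) P by (auto simp: V0_def GL2_iff zmod_minus1)
qed

lemma Vmat_nonPSL: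
  assumes "prime p" "v \<in> {1..<int p}" "\<not> QuadRes (int p) v"
  shows "Vmat p v \<in> PGL2 p - PSL2 p"
proof -
  have P: "int p > 1" using prime_gt1_int[OF assms(1)] .
  have "mdet p (V0 p v) = v" using V0_det assms by blast
  thus ?thesis unfolding Vmat_V0 using PSL2_pcl[OF assms(1) V0_GL2[OF assms(1,2)]] assms(3)
      pcl_PGL2[OF V0_GL2[OF assms(1,2)]] by simp
qed

lemma Vmat_sq:
  assumes pr: "prime p" and v: "v \<in> {1..<int p}"
  shows "pmul p (Vmat p v) (Vmat p v) = pone p"
proof -
  have P: "int p > 1" using prime_gt1_int[OF pr] .
  have "mmul p (V0 p v) (V0 p v) = smul p (v * (int p - 1)) I2"
    using v P by (simp add: V0_def I2_def mmul.simps smul.simps zmod_minus1 ac_simps)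
  moreover have "\<not> int p dvd v * (int p - 1)"
  proof -
    have "\<not> int p dvd (int p - 1)" using range_not_dvd[of "int p - 1" p] P by simp
    thus ?thesis using range_not_dvd[OF v] pr prime_dvd_mult_iff[of "int p"] by simp
  qed
  ultimately show ?thesis unfolding Vmat_V0 pmul_pcl[OF pr] pone_I2 using pcl_smul[OF pr] by simp
qed


section \<open>Automorphisms\<close>

lemma GQ_add: "\<sigma> \<in> GQ \<Longrightarrow> \<sigma> (x + y) = \<sigma> x + \<sigma> y" unfolding GQ_def by auto
lemma GQ_mult: "\<sigma> \<in> GQ \<Longrightarrow> \<sigma> (x * y) = \<sigma> x * \<sigma> y" unfolding GQ_def by auto
lemma GQ_one: "\<sigma> \<in> GQ \<Longrightarrow> \<sigma> 1 = 1" unfolding GQ_def by auto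
lemma GQ_bij: "\<sigma> \<in> GQ \<Longrightarrow> bij \<sigma>" unfolding GQ_def by auto

lemma GQ_zero: "\<sigma> \<in> GQ \<Longrightarrow> \<sigma> 0 = 0"
  using GQ_add[of \<sigma> 0 0] by simp

lemma GQ_uminus: "\<sigma> \<in> GQ \<Longrightarrow> \<sigma> (- x) = - \<sigma> x"
  using GQ_add[of \<sigma> x "-x"] GQ_zero[of \<sigma>] by (simp add: add_eq_0_iff)

lemma GQ_diff: "\<sigma> \<in> GQ \<Longrightarrow> \<sigma> (x - y) = \<sigma> x - \<sigma> y"
  using GQ_add[of \<sigma> x "-y"] GQ_uminus[of \<sigma> y] by simp

lemma GQ_of_nat: "\<sigma> \<in> GQ \<Longrightarrow> \<sigma> (of_nat n) = of_nat n"
  by (induction n) (simp_all add: GQ_zero GQ_one GQ_add)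

lemma GQ_of_int: "\<sigma> \<in> GQ \<Longrightarrow> \<sigma> (of_int n) = of_int n"
proof (cases "n \<ge> 0")
  case True
  assume s: "\<sigma> \<in> GQ"
  have "n = int (nat n)" using True by simp
  then show ?thesis using GQ_of_nat[OF s, of "nat n"] by (metis of_int_of_nat_eq)
next
  case False
  assume s: "\<sigma> \<in> GQ"
  have "n = - int (nat (-n))" using False by simp
  then show ?thesis using GQ_of_nat[OF s, of "nat (-n)"] GQ_uminus[OF s] by (metis of_int_minus of_int_of_nat_eq)
qed

lemma GQ_inverse: "\<sigma> \<in> GQ \<Longrightarrow> \<sigma> (inverse x) = inverse (\<sigma> x)"
proof (cases "x = 0")
  case True
  assume "\<sigma> \<in> GQ" thus ?thesis using True by (simp add: GQ_zero)
next
  case False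
  assume s: "\<sigma> \<in> GQ"
  have "\<sigma> x * \<sigma> (inverse x) = 1" using GQ_mult[OF s, of x "inverse x"] GQ_one[OF s] False by simp
  thus ?thesis by (metis inverse_unique)
qed

lemma GQ_divide: "\<sigma> \<in> GQ \<Longrightarrow> \<sigma> (x / y) = \<sigma> x / \<sigma> y"
  by (simp add: divide_inverse GQ_mult GQ_inverse)

lemma GQ_of_rat: "\<sigma> \<in> GQ \<Longrightarrow> \<sigma> (of_rat q) = of_rat q"
proof (cases q)
  case (Fract a b)
  assume s: "\<sigma> \<in> GQ"
  show ?thesis using Fract by (simp add: of_rat_rat GQ_divide[OF s] GQ_of_int[OF s])
qed

lemma GQ_sum: "\<sigma> \<in> GQ \<Longrightarrow> \<sigma> (sum f S) = (\<Sum>s\<in>S. \<sigma> (f s))"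
  by (induction S rule: infinite_finite_induct) (simp_all add: GQ_zero GQ_add)

lemma GQ_power: "\<sigma> \<in> GQ \<Longrightarrow> \<sigma> (x ^ n) = \<sigma> x ^ n"
  by (induction n) (simp_all add: GQ_one GQ_mult)

lemma GQ_id: "id \<in> GQ" unfolding GQ_def by auto

lemma GQ_comp: "\<sigma> \<in> GQ \<Longrightarrow> \<tau> \<in> GQ \<Longrightarrow> \<sigma> \<circ> \<tau> \<in> GQ"
  unfolding GQ_def by (auto intro: bij_comp)

lemma GQ_inv_left: "\<sigma> \<in> GQ \<Longrightarrow> inv_into UNIV \<sigma> (\<sigma> x) = x"
  using GQ_bij bij_is_inj inv_into_f_f by fastforce

lemma GQ_inv_right: "\<sigma> \<in> GQ \<Longrightarrow> \<sigma> (inv_into UNIV \<sigma> x) = x"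
  using GQ_bij bij_is_surj f_inv_into_f by (metis UNIV_I surj_f_inv_f)

lemma GQ_inv: "\<sigma> \<in> GQ \<Longrightarrow> inv_into UNIV \<sigma> \<in> GQ"
proof -
  assume s: "\<sigma> \<in> GQ"
  let ?i = "inv_into UNIV \<sigma>"
  have inj: "inj \<sigma>" using GQ_bij[OF s] bij_is_inj by blast
  have "bij ?i" using GQ_bij[OF s] by (simp add: bij_imp_bij_inv)
  moreover have "?i 1 = 1" using GQ_inv_left[OF s, of 1] GQ_one[OF s] by simp
  moreover have "?i (x + y) = ?i x + ?i y" for x y
  proof -
    have "\<sigma> (?i x + ?i y) = x + y" by (simp add: GQ_add[OF s] GQ_inv_right[OF s])
    thus ?thesis using GQ_inv_left[OF s] by metis
  qed
  moreover have "?i (x * y) = ?i x * ?i y" for x y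
  proof -
    have "\<sigma> (?i x * ?i y) = x * y" by (simp add: GQ_mult[OF s] GQ_inv_right[OF s])
    thus ?thesis using GQ_inv_left[OF s] by metis
  qed
  ultimately show ?thesis unfolding GQ_def by blast
qed

lemma GQ_comp_inv: "\<sigma> \<in> GQ \<Longrightarrow> \<sigma> \<circ> inv_into UNIV \<sigma> = id"
  by (rule ext) (simp add: GQ_inv_right)

lemma GQ_inv_comp: "\<sigma> \<in> GQ \<Longrightarrow> inv_into UNIV \<sigma> \<circ> \<sigma> = id"
  by (rule ext) (simp add: GQ_inv_left)

lemma Gal_sub: "Gal K \<subseteq> GQ" unfolding Gal_def by auto

lemma Gal_comp: "\<sigma> \<in> Gal K \<Longrightarrow> \<tau> \<in> Gal K \<Longrightarrow> \<sigma> \<circ> \<tau> \<in> Gal K"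
  unfolding Gal_def by (auto intro: GQ_comp)

lemma Gal_inv: assumes "\<sigma> \<in> Gal K" shows "inv_into UNIV \<sigma> \<in> Gal K"
proof -
  have s: "\<sigma> \<in> GQ" and f: "\<forall>x\<in>K. \<sigma> x = x" using assms unfolding Gal_def by auto
  have "inv_into UNIV \<sigma> x = x" if "x \<in> K" for x using GQ_inv_left[OF s, of x] f that by simp
  thus ?thesis using GQ_inv[OF s] unfolding Gal_def by blast
qed

lemma Gal_id: "id \<in> Gal K" unfolding Gal_def using GQ_id by auto

lemma Gal_mono: "K \<subseteq> L \<Longrightarrow> Gal L \<subseteq> Gal K" unfolding Gal_def by auto

lemma fix_span:
  assumes "\<sigma> \<in> GQ" "\<forall>s\<in>S. \<sigma> s = s"
  shows "\<sigma> (\<Sum>s\<in>S. of_rat (c s) * s) = (\<Sum>s\<in>S. of_rat (c s) * s)"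
  using assms by (simp add: GQ_sum GQ_mult GQ_of_rat)

lemma number_field_fix:
  assumes "number_field F"
  obtains S where "finite S" "\<And>\<sigma>. \<sigma> \<in> GQ \<Longrightarrow> \<forall>s\<in>S. \<sigma> s = s \<Longrightarrow> \<sigma> \<in> Gal F"
proof -
  obtain S where S: "finite S" "F \<subseteq> {\<Sum>s\<in>S. of_rat (c s) * s | c. True}"
    using assms unfolding number_field_def by blast
  have "\<sigma> \<in> Gal F" if "\<sigma> \<in> GQ" "\<forall>s\<in>S. \<sigma> s = s" for \<sigma>
    unfolding Gal_def using that S(2) fix_span[OF that] by blast
  thus ?thesis using that S(1) by blast
qed

section \<open>Roots of unity\<close>

definition Phi :: "nat \<Rightarrow> 'a::comm_ring_1 poly" where "Phi p = (\<Sum>k<p. monom 1 k)"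

lemma coeff_Phi: "coeff (Phi p) i = (if i < p then 1 else 0)"
  unfolding Phi_def by (simp add: coeff_sum coeff_monom)

lemma poly_Phi: "poly (Phi p) x = (\<Sum>k<p. x^k)"
  unfolding Phi_def by (simp add: poly_sum poly_monom)

lemma degree_Phi: "p > 0 \<Longrightarrow> degree (Phi p :: 'a::{comm_ring_1,zero_neq_one} poly) = p - 1"
proof (rule antisym)
  assume "p > 0"
  show "degree (Phi p :: 'a poly) \<le> p - 1" by (rule degree_le) (auto simp: coeff_Phi)
  show "p - 1 \<le> degree (Phi p :: 'a poly)" by (rule le_degree) (use \<open>p > 0\<close> in \<open>simp add: coeff_Phi\<close>)
qed

lemma zeta_spec: assumes "prime p" shows "zeta p ^ p = 1" "zeta p \<noteq> 1"
proof -
  have p1: "p > 1" using prime_gt_1_nat[OF assms] .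
  have "degree (Phi p :: qbar poly) = p - 1" using p1 by (intro degree_Phi) simp
  hence "degree (Phi p :: qbar poly) > 0" using p1 by simp
  then obtain z :: qbar where z: "poly (Phi p) z = 0" using alg_closed_imp_poly_has_root by blast
  hence s: "(\<Sum>k<p. z^k) = 0" by (simp add: poly_Phi)
  have "z \<noteq> 1" using s p1 by auto
  moreover have "z ^ p = 1" using one_diff_power_eq[of z p] s by simp
  ultimately have ex: "\<exists>z::qbar. z ^ p = 1 \<and> z \<noteq> 1" by blast
  show "zeta p ^ p = 1" "zeta p \<noteq> 1" unfolding zeta_def using someI_ex[OF ex] by auto
qed

lemma zeta_pow_eq_1: assumes "prime p" shows "zeta p ^ k = 1 \<longleftrightarrow> p dvd k"
proof
  assume "p dvd k" then obtain m where "k = p * m" by blast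
  thus "zeta p ^ k = 1" using zeta_spec[OF assms] by (simp add: power_mult)
next
  assume h: "zeta p ^ k = 1"
  show "p dvd k"
  proof (rule ccontr)
    assume nd: "\<not> p dvd k"
    hence k0: "k \<noteq> 0" by (metis dvd_0_right)
    have "coprime p k" using prime_imp_coprime[OF assms nd] .
    hence g: "gcd k p = 1" by (metis coprime_iff_gcd_eq_1 coprime_commute)
    obtain x y where xy: "k * x = p * y + gcd k p" using bezout_nat[OF k0] by blast
    have "zeta p ^ (k * x) = 1" using h by (simp add: power_mult)
    moreover have "zeta p ^ (p * y + 1) = zeta p" using zeta_spec[OF assms] by (simp add: power_add power_mult)
    ultimately show False using xy g zeta_spec(2)[OF assms] by simp
  qed
qed

lemma zeta_pow_mod: "prime p \<Longrightarrow> zeta p ^ k = zeta p ^ (k mod p)"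
proof -
  assume pr: "prime p"
  have "zeta p ^ k = zeta p ^ (p * (k div p) + k mod p)" by simp
  also have "\<dots> = zeta p ^ (k mod p)" by (simp only: power_add power_mult zeta_spec(1)[OF pr] power_one mult.left_neutral)
  finally show ?thesis .
qed

lemma sum_root_pow0:
  assumes "prime p" "\<not> p dvd i"
  shows "(\<Sum>k<p. (zeta p ^ i) ^ k) = 0"
proof -
  let ?w = "zeta p ^ i"
  have "?w \<noteq> 1" using zeta_pow_eq_1[OF assms(1)] assms(2) by simp
  moreover have "?w ^ p = 1" using zeta_spec[OF assms(1)] by (metis power_mult power_mult_distrib mult.commute power_one)
  ultimately show ?thesis using one_diff_power_eq[of ?w p] by simp
qed

lemma sum_root_pow1:
  assumes "prime p" "\<not> p dvd i"
  shows "(\<Sum>k\<in>{1..<p}. (zeta p ^ i) ^ k) = -1"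
proof -
  have "(\<Sum>k<p. (zeta p ^ i) ^ k) = (\<Sum>k\<in>insert 0 {1..<p}. (zeta p ^ i) ^ k)"
    using prime_gt_1_nat[OF assms(1)] by (intro sum.cong) auto
  also have "\<dots> = 1 + (\<Sum>k\<in>{1..<p}. (zeta p ^ i) ^ k)" by (subst sum.insert) auto
  finally show ?thesis using sum_root_pow0[OF assms] by (simp add: add_eq_0_iff)
qed

lemma sum_root_pow_dvd:
  assumes "prime p" "p dvd i"
  shows "(\<Sum>k\<in>{1..<p}. (zeta p ^ i) ^ k) = of_nat (p - 1)"
proof -
  have "zeta p ^ i = 1" using zeta_pow_eq_1[OF assms(1)] assms(2) by simp
  thus ?thesis by simp
qed


lemma map_poly_of_int_add: "map_poly (of_int :: int \<Rightarrow> 'a::comm_ring_1) (f + g) = map_poly of_int f + map_poly of_int g"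
  by (intro poly_eqI) (simp add: coeff_map_poly)

lemma map_poly_of_int_diff: "map_poly (of_int :: int \<Rightarrow> 'a::comm_ring_1) (f - g) = map_poly of_int f - map_poly of_int g"
  by (intro poly_eqI) (simp add: coeff_map_poly)

lemma map_poly_of_int_mult: "map_poly (of_int :: int \<Rightarrow> 'a::comm_ring_1) (f * g) = map_poly of_int f * map_poly of_int g"
  by (intro poly_eqI) (simp add: coeff_map_poly coeff_mult of_int_sum)

lemma map_poly_of_int_smult: "map_poly (of_int :: int \<Rightarrow> 'a::comm_ring_1) (smult c f) = smult (of_int c) (map_poly of_int f)"
  by (rule map_poly_smult) simp_all

lemma map_poly_of_rat_add: "map_poly (of_rat :: rat \<Rightarrow> 'a::field_char_0) (f + g) = map_poly of_rat f + map_poly of_rat g"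
  by (intro poly_eqI) (simp add: coeff_map_poly of_rat_add)

lemma map_poly_of_rat_diff: "map_poly (of_rat :: rat \<Rightarrow> 'a::field_char_0) (f - g) = map_poly of_rat f - map_poly of_rat g"
  by (intro poly_eqI) (simp add: coeff_map_poly of_rat_diff)

lemma map_poly_of_rat_mult: "map_poly (of_rat :: rat \<Rightarrow> 'a::field_char_0) (f * g) = map_poly of_rat f * map_poly of_rat g"
  by (intro poly_eqI) (simp add: coeff_map_poly coeff_mult of_rat_sum of_rat_mult)

lemma map_poly_of_rat_smult: "map_poly (of_rat :: rat \<Rightarrow> 'a::field_char_0) (smult c f) = smult (of_rat c) (map_poly of_rat f)"
  by (rule map_poly_smult) (simp_all add: of_rat_mult)

lemma map_poly_of_rat_of_int: "map_poly (of_rat :: rat \<Rightarrow> 'a::field_char_0) (map_poly of_int f) = map_poly of_int f"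
  by (intro poly_eqI) (simp add: coeff_map_poly)

section \<open>The cyclotomic polynomial is irreducible\<close>

definition Psi :: "nat \<Rightarrow> int poly" where "Psi p = pcompose (Phi p) [:1,1:]"

lemma Phi_mult_int: "[:-1,1:] * (Phi p :: int poly) = monom 1 p - 1"
proof (rule poly_ext)
  fix x :: int
  show "poly ([:-1,1:] * Phi p) x = poly (monom 1 p - 1) x"
    using one_diff_power_eq[of x p] by (simp add: poly_Phi poly_monom algebra_simps)
qed

lemma Psi_eq: "pCons 0 (Psi p) = [:1,1:] ^ p - 1"
proof (rule poly_ext)
  fix x :: int
  have "poly (pCons 0 (Psi p)) x = x * (\<Sum>k<p. (x+1)^k)"
    by (simp add: Psi_def poly_pcompose poly_Phi algebra_simps)
  also have "\<dots> = (x+1)^p - 1" using one_diff_power_eq[of "x+1" p] by (simp add: algebra_simps)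
  finally show "poly (pCons 0 (Psi p)) x = poly ([:1,1:] ^ p - 1) x" by (simp add: algebra_simps)
qed

lemma coeff_Psi: "k < p \<Longrightarrow> coeff (Psi p) k = int (p choose Suc k)"
proof -
  assume k: "k < p"
  have "coeff (Psi p) k = coeff (pCons 0 (Psi p)) (Suc k)" by simp
  also have "\<dots> = coeff ([:1,1:] ^ p) (Suc k)" unfolding Psi_eq by simp
  also have "\<dots> = int (p choose Suc k)" using k by (simp add: coeff_linear_poly_power)
  finally show ?thesis .
qed

lemma degree_Psi: "p > 0 \<Longrightarrow> degree (Psi p) = p - 1"
  unfolding Psi_def by (simp add: degree_pcompose degree_Phi)

lemma eisenstein_aux:
  fixes f g :: "int poly" and q :: int
  assumes q: "prime q" and fg: "f * g = P" and df: "degree f \<ge> 1" and dg: "degree g \<ge> 1"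
    and mid: "\<forall>k<degree P. q dvd coeff P k" and c0: "\<not> q^2 dvd coeff P 0"
    and lc: "\<not> q dvd lead_coeff P" and f0: "q dvd coeff f 0"
  shows False
proof -
  have f0': "f \<noteq> 0" "g \<noteq> 0" using df dg by auto
  have degP: "degree P = degree f + degree g" using degree_mult_eq[OF f0'] fg by simp
  have "lead_coeff P = lead_coeff f * lead_coeff g" using lead_coeff_mult[of f g] fg by simp
  hence nlf: "\<not> q dvd coeff f (degree f)" using lc by auto
  define m where "m = (LEAST i. \<not> q dvd coeff f i)"
  have m1: "\<not> q dvd coeff f m" unfolding m_def by (rule LeastI) (rule nlf)
  have m2: "m \<le> degree f" unfolding m_def by (rule Least_le) (rule nlf)
  have m3: "\<And>i. i < m \<Longrightarrow> q dvd coeff f i" unfolding m_def using not_less_Least by blast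
  have "m < degree P" using m2 degP dg by simp
  hence "q dvd coeff P m" using mid by blast
  also have "coeff P m = (\<Sum>i<m. coeff f i * coeff g (m - i)) + coeff f m * coeff g 0"
    unfolding fg[symmetric] coeff_mult by (simp add: lessThan_Suc_atMost[symmetric])
  finally have "q dvd (\<Sum>i<m. coeff f i * coeff g (m - i)) + coeff f m * coeff g 0" .
  moreover have "q dvd (\<Sum>i<m. coeff f i * coeff g (m - i))" by (intro dvd_sum) (simp add: m3)
  ultimately have "q dvd coeff f m * coeff g 0" using dvd_add_right_iff by blast
  hence "q dvd coeff g 0" using m1 q prime_dvd_mult_iff by blast
  hence "q * q dvd coeff f 0 * coeff g 0" using f0 by (simp add: mult_dvd_mono)
  moreover have "coeff P 0 = coeff f 0 * coeff g 0" unfolding fg[symmetric] by (simp add: coeff_mult)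
  ultimately show False using c0 by (simp add: power2_eq_square)
qed

lemma Psi_coeffs:
  assumes pr: "prime p"
  shows "\<forall>k<degree (Psi p). int p dvd coeff (Psi p) k" "\<not> (int p)^2 dvd coeff (Psi p) 0"
    "\<not> int p dvd lead_coeff (Psi p)" "coeff (Psi p) 0 = int p" "lead_coeff (Psi p) = 1"
proof -
  have p1: "p > 1" using prime_gt_1_nat[OF pr] .
  have dP: "degree (Psi p) = p - 1" using p1 by (simp add: degree_Psi)
  show "\<forall>k<degree (Psi p). int p dvd coeff (Psi p) k"
  proof (intro allI impI)
    fix k assume "k < degree (Psi p)"
    hence k: "Suc k < p" using dP by simp
    have "p dvd (p choose Suc k)" by (rule dvd_choose_prime) (use k pr in auto)
    thus "int p dvd coeff (Psi p) k" using k by (simp add: coeff_Psi)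
  qed
  show c0: "coeff (Psi p) 0 = int p" using p1 by (simp add: coeff_Psi)
  show lc: "lead_coeff (Psi p) = 1" using p1 dP by (simp add: coeff_Psi)
  show "\<not> (int p)^2 dvd coeff (Psi p) 0"
  proof
    assume "(int p)^2 dvd coeff (Psi p) 0"
    hence "int p * int p dvd int p" using c0 by (simp add: power2_eq_square)
    hence "int p * int p \<le> int p" using p1 by (intro zdvd_imp_le) auto
    thus False using p1 by (simp add: mult_le_cancel_right1)
  qed
  show "\<not> int p dvd lead_coeff (Psi p)" using lc p1 by simp
qed

lemma irreducible_Psi: assumes pr: "prime p" shows "irreducible (Psi p)"
proof (rule irreducibleI)
  have p1: "p > 1" using prime_gt_1_nat[OF pr] .
  note PC = Psi_coeffs[OF pr]
  show "Psi p \<noteq> 0" using PC(5) by auto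
  show "\<not> is_unit (Psi p)"
  proof
    assume "is_unit (Psi p)"
    hence "degree (Psi p) = 0" by (auto simp: is_unit_poly_iff)
    thus False using p1 degree_Psi[of p] by simp
  qed
  fix a b assume ab: "Psi p = a * b"
  show "is_unit a \<or> is_unit b"
  proof (cases "degree a = 0 \<or> degree b = 0")
    case True
    thus ?thesis
    proof
      assume "degree a = 0"
      then obtain c where c: "a = [:c:]" by (metis degree_eq_zeroE)
      have "1 = c * lead_coeff b" using PC(5) ab c lead_coeff_mult[of a b] by simp
      hence "is_unit c" by (metis dvd_triv_left)
      thus ?thesis using c by (simp add: is_unit_const_poly_iff)
    next
      assume "degree b = 0"
      then obtain c where c: "b = [:c:]" by (metis degree_eq_zeroE)
      have "1 = lead_coeff a * c" using PC(5) ab c lead_coeff_mult[of a b] by simp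
      hence "is_unit c" by (metis dvd_triv_right)
      thus ?thesis using c by (simp add: is_unit_const_poly_iff)
    qed
  next
    case False
    hence d: "degree a \<ge> 1" "degree b \<ge> 1" by auto
    have "coeff a 0 * coeff b 0 = int p" using PC(4) ab by (simp add: coeff_mult)
    hence "int p dvd coeff a 0 * coeff b 0" by simp
    hence "int p dvd coeff a 0 \<or> int p dvd coeff b 0" using pr prime_dvd_mult_iff[of "int p"] by simp
    thus ?thesis
    proof
      assume "int p dvd coeff a 0"
      from eisenstein_aux[of "int p" a b "Psi p", OF _ ab[symmetric] d PC(1-3) this] pr show ?thesis by simp
    next
      assume "int p dvd coeff b 0"
      from eisenstein_aux[of "int p" b a "Psi p", OF _ _ d(2,1) PC(1-3) this] pr ab show ?thesis
        by (simp add: mult.commute)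
    qed
  qed
qed

lemma irreducible_Phi: assumes pr: "prime p" shows "irreducible (Phi p :: int poly)"
proof (rule irreducibleI)
  have p1: "p > 1" using prime_gt_1_nat[OF pr] .
  show "Phi p \<noteq> (0::int poly)" using p1 coeff_Phi[of p 0] by (metis less_trans zero_less_one one_neq_zero coeff_0)
  show "\<not> is_unit (Phi p :: int poly)"
  proof
    assume "is_unit (Phi p :: int poly)"
    hence "degree (Phi p :: int poly) = 0" by (auto simp: is_unit_poly_iff)
    thus False using p1 degree_Phi[of p, where 'a=int] by simp
  qed
  fix a b :: "int poly" assume ab: "Phi p = a * b"
  have "Psi p = pcompose a [:1,1:] * pcompose b [:1,1:]" unfolding Psi_def ab by (rule pcompose_mult)
  hence "is_unit (pcompose a [:1,1:]) \<or> is_unit (pcompose b [:1,1:])"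
    using irreducible_Psi[OF pr] by (metis irreducibleD)
  thus "is_unit a \<or> is_unit b"
  proof
    assume u: "is_unit (pcompose a [:1,1:])"
    hence "degree (pcompose a [:1,1:]) = 0" by (auto simp: is_unit_poly_iff)
    hence "degree a = 0" by (simp add: degree_pcompose)
    then obtain c where c: "a = [:c:]" by (metis degree_eq_zeroE)
    thus ?thesis using u by (simp add: pcompose_const)
  next
    assume u: "is_unit (pcompose b [:1,1:])"
    hence "degree (pcompose b [:1,1:]) = 0" by (auto simp: is_unit_poly_iff)
    hence "degree b = 0" by (simp add: degree_pcompose)
    then obtain c where c: "b = [:c:]" by (metis degree_eq_zeroE)
    thus ?thesis using u by (simp add: pcompose_const)
  qed
qed

lemma content_Phi: assumes "p > 0" shows "content (Phi p :: int poly) = 1"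
proof -
  have "content (Phi p :: int poly) dvd coeff (Phi p) (p - 1)" by (rule content_dvd_coeff)
  hence "content (Phi p :: int poly) dvd 1" using assms by (simp add: coeff_Phi)
  hence "normalize (content (Phi p :: int poly)) = 1" by (simp add: is_unit_normalize)
  thus ?thesis by (metis normalize_content)
qed


lemma Phi_zeta: assumes "prime p" shows "poly (Phi p) (zeta p) = 0"
proof -
  have "\<not> p dvd 1" using assms by (metis prime_gt_1_nat nat_dvd_not_less zero_less_one)
  thus ?thesis using sum_root_pow0[OF assms, of 1] by (simp add: poly_Phi)
qed

lemma Phi_zeta_pow: assumes "prime p" "\<not> p dvd k" shows "poly (Phi p) (zeta p ^ k) = 0"
  using sum_root_pow0[OF assms] by (simp add: poly_Phi)

lemma map_of_int_Phi: "map_poly of_int (Phi p) = (Phi p :: 'a::comm_ring_1 poly)"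
  by (intro poly_eqI) (simp add: coeff_map_poly coeff_Phi)

lemma map_of_rat_Phi: "map_poly of_rat (Phi p) = (Phi p :: 'a::field_char_0 poly)"
  by (intro poly_eqI) (simp add: coeff_map_poly coeff_Phi)

lemma min_deg:
  assumes pr: "prime p"
  shows "r \<noteq> 0 \<Longrightarrow> poly (map_poly of_int r) (zeta p) = 0 \<Longrightarrow> p - 1 \<le> degree (r::int poly)"
proof (induction "degree r" arbitrary: r rule: less_induct)
  case less
  show ?case
  proof (rule ccontr)
    assume lt: "\<not> p - 1 \<le> degree r"
    define r' where "r' = primitive_part r"
    have r_eq: "r = smult (content r) r'" unfolding r'_def by simp
    have cr0: "content r \<noteq> 0" using less.prems(1) by simp
    have "poly (map_poly of_int r) (zeta p) = of_int (content r) * poly (map_poly of_int r') (zeta p)"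
      by (subst r_eq) (simp add: map_poly_of_int_smult)
    hence r'z: "poly (map_poly of_int r') (zeta p) = 0" using less.prems(2) cr0 by simp
    have dr': "degree r' = degree r" unfolding r'_def by simp
    have cr': "content r' = 1" unfolding r'_def using less.prems(1) by simp
    have r'nz: "r' \<noteq> 0" unfolding r'_def using less.prems(1) by simp
    let ?P = "Phi p :: int poly"
    obtain a q where aq: "a \<noteq> 0" "smult a ?P = r' * q + pseudo_mod ?P r'"
      using pseudo_mod(1)[OF r'nz] by blast
    have s: "pseudo_mod ?P r' = 0 \<or> degree (pseudo_mod ?P r') < degree r'"
      using pseudo_mod(2)[OF r'nz] by blast
    have Pz: "poly (map_poly of_int ?P) (zeta p) = 0" using Phi_zeta[OF pr] by (simp add: map_of_int_Phi)
    have pm: "pseudo_mod ?P r' = smult a ?P - r' * q" using aq(2) by simp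
    have "poly (map_poly of_int (pseudo_mod ?P r')) (zeta p) = 0"
      unfolding pm by (simp add: map_poly_of_int_diff map_poly_of_int_mult map_poly_of_int_smult Pz r'z)
    hence sm: "pseudo_mod ?P r' = 0"
    proof -
      assume z: "poly (map_poly of_int (pseudo_mod ?P r')) (zeta p) = 0"
      show ?thesis
      proof (rule ccontr)
        assume nz: "pseudo_mod ?P r' \<noteq> 0"
        hence d: "degree (pseudo_mod ?P r') < degree r" using s dr' by simp
        from less.hyps[OF d nz z] d lt show False by simp
      qed
    qed
    have "r' dvd smult a ?P" using aq(2) sm by simp
    hence "fract_poly r' dvd fract_poly (smult a ?P)" by (rule fract_poly_dvd)
    hence "fract_poly r' dvd smult (to_fract a) (fract_poly ?P)" by simp
    hence "fract_poly r' dvd fract_poly ?P" using aq(1) by (simp add: dvd_smult_iff)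
    hence "r' dvd ?P" using cr' by (rule fract_poly_dvdD)
    then obtain w where w: "?P = r' * w" by (elim dvdE)
    hence "is_unit r' \<or> is_unit w" using irreducible_Phi[OF pr] by (metis irreducibleD)
    thus False
    proof
      assume "is_unit r'"
      then obtain c where c: "r' = [:c:]" "c dvd 1" by (auto simp: is_unit_poly_iff)
      hence "c \<noteq> 0" by auto
      thus False using r'z c by (simp add: map_poly_pCons)
    next
      assume "is_unit w"
      hence "degree w = 0" by (auto simp: is_unit_poly_iff)
      moreover have "w \<noteq> 0" using w pr prime_gt_1_nat[OF pr] coeff_Phi[of p 0, where 'a=int] by auto
      ultimately have "degree ?P = degree r'" using w r'nz by (simp add: degree_mult_eq)
      thus False using lt dr' prime_gt_1_nat[OF pr] degree_Phi[of p, where 'a=int] by simp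
    qed
  qed
qed

lemma clear_denom: "\<exists>c::int. c \<noteq> 0 \<and> (\<exists>t::int poly. map_poly of_int t = smult (of_int c) (s::rat poly))"
proof (induction s)
  case 0
  show ?case by (rule exI[of _ 1]) (auto intro: exI[of _ 0])
next
  case (pCons a s)
  then obtain c' t' where ct: "c' \<noteq> 0" "map_poly of_int t' = smult (of_int c') s" by blast
  obtain n d where nd: "quotient_of a = (n, d)" by (cases "quotient_of a") auto
  have d: "d > 0" using quotient_of_denom_pos[OF nd] .
  have a: "a = of_int n / of_int d" using quotient_of_div[OF nd] .
  let ?t = "pCons (n * c') (smult d t')"
  have "map_poly of_int ?t = pCons (of_int (n * c')) (smult (of_int d) (smult (of_int c') s))"
    by (simp add: map_poly_pCons map_poly_of_int_smult ct(2))
  also have "\<dots> = smult (of_int (c' * d)) (pCons a s)"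
    using d by (simp add: a field_simps)
  finally show ?case using ct(1) d by (intro exI[of _ "c' * d"]) auto
qed

lemma vanish:
  assumes pr: "prime p" and z: "poly (map_poly of_rat f) (zeta p) = 0"
  shows "(Phi p :: rat poly) dvd f"
proof -
  let ?P = "Phi p :: rat poly"
  have p1: "p > 1" using prime_gt_1_nat[OF pr] .
  have Pnz: "?P \<noteq> 0" using p1 degree_Phi[of p, where 'a=rat] coeff_Phi[of p 0, where 'a=rat] by auto
  define s where "s = f mod ?P"
  have fs: "f = (f div ?P) * ?P + s" unfolding s_def by simp
  have sz: "poly (map_poly of_rat s) (zeta p) = 0"
  proof -
    have "poly (map_poly of_rat f) (zeta p) = poly (map_poly of_rat (f div ?P)) (zeta p) * poly (Phi p) (zeta p)
          + poly (map_poly of_rat s) (zeta p)"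
      by (subst fs) (simp add: map_poly_of_rat_add map_poly_of_rat_mult map_of_rat_Phi)
    thus ?thesis using z Phi_zeta[OF pr] by simp
  qed
  have "s = 0"
  proof (rule ccontr)
    assume snz: "s \<noteq> 0"
    hence ds: "degree s < p - 1" using degree_mod_less[OF Pnz, of f] degree_Phi[of p, where 'a=rat] p1
      unfolding s_def by auto
    obtain c t where ct: "c \<noteq> 0" "map_poly of_int t = smult (of_int c) s" using clear_denom by blast
    have "degree (map_poly (of_int :: int \<Rightarrow> rat) t) = degree t" by (rule degree_map_poly) simp
    hence dt: "degree t = degree s" using ct by simp
    have tnz: "t \<noteq> 0" using ct snz by auto
    have "poly (map_poly of_int t) (zeta p) = poly (map_poly (of_rat :: rat \<Rightarrow> qbar) (map_poly of_int t)) (zeta p)"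
      by (simp add: map_poly_of_rat_of_int)
    also have "\<dots> = of_rat (of_int c) * poly (map_poly of_rat s) (zeta p)"
      by (simp add: ct(2) map_poly_of_rat_smult)
    also have "\<dots> = 0" using sz by simp
    finally have "p - 1 \<le> degree t" using min_deg[OF pr tnz] by blast
    thus False using dt ds by simp
  qed
  thus ?thesis unfolding s_def by (simp add: mod_eq_0_iff_dvd)
qed

lemma vanish_pow:
  assumes pr: "prime p" and k: "\<not> p dvd k" and z: "poly (map_poly of_rat f) (zeta p) = 0"
  shows "poly (map_poly of_rat f) (zeta p ^ k) = 0"
proof -
  obtain w where w: "f = Phi p * w" using vanish[OF pr z] by (elim dvdE)
  show ?thesis unfolding w by (simp add: map_poly_of_rat_mult map_of_rat_Phi Phi_zeta_pow[OF pr k])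
qed


definition ev :: "rat poly \<Rightarrow> qbar \<Rightarrow> qbar" where "ev f x = poly (map_poly of_rat f) x"

lemma ev_add: "ev (f + g) x = ev f x + ev g x" unfolding ev_def by (simp add: map_poly_of_rat_add)
lemma ev_diff: "ev (f - g) x = ev f x - ev g x" unfolding ev_def by (simp add: map_poly_of_rat_diff)
lemma ev_mult: "ev (f * g) x = ev f x * ev g x" unfolding ev_def by (simp add: map_poly_of_rat_mult)
lemma ev_smult: "ev (smult c f) x = of_rat c * ev f x" unfolding ev_def by (simp add: map_poly_of_rat_smult)
lemma ev_pCons: "ev (pCons a f) x = of_rat a + x * ev f x" unfolding ev_def by (simp add: map_poly_pCons)
lemma ev_const: "ev [:a:] x = of_rat a" by (simp add: ev_def map_poly_pCons)
lemma ev_X: "ev [:0,1:] x = x" by (simp add: ev_def map_poly_pCons)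
lemma ev_0: "ev 0 x = 0" by (simp add: ev_def)
lemma ev_1: "ev 1 x = 1" by (metis ev_const of_rat_1 one_pCons)
lemma ev_power: "ev (f ^ n) x = ev f x ^ n" by (induction n) (simp_all add: ev_mult ev_1)
lemma ev_Xpow: "ev ([:0,1:] ^ n) x = x ^ n" by (simp add: ev_power ev_X)

definition Ecyc :: "nat \<Rightarrow> qbar set" where "Ecyc p = {ev f (zeta p) | f. True}"

lemma EcycI: "y = ev f (zeta p) \<Longrightarrow> y \<in> Ecyc p" unfolding Ecyc_def by blast
lemma EcycE: "y \<in> Ecyc p \<Longrightarrow> (\<And>f. y = ev f (zeta p) \<Longrightarrow> Q) \<Longrightarrow> Q" unfolding Ecyc_def by blast

lemma Ecyc_add: "x \<in> Ecyc p \<Longrightarrow> y \<in> Ecyc p \<Longrightarrow> x + y \<in> Ecyc p"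
  by (metis EcycE EcycI ev_add)
lemma Ecyc_diff: "x \<in> Ecyc p \<Longrightarrow> y \<in> Ecyc p \<Longrightarrow> x - y \<in> Ecyc p"
  by (metis EcycE EcycI ev_diff)
lemma Ecyc_mult: "x \<in> Ecyc p \<Longrightarrow> y \<in> Ecyc p \<Longrightarrow> x * y \<in> Ecyc p"
  by (metis EcycE EcycI ev_mult)
lemma Ecyc_rat: "of_rat q \<in> Ecyc p" by (rule EcycI, rule ev_const[symmetric])
lemma Ecyc_zeta: "zeta p \<in> Ecyc p" by (rule EcycI, rule ev_X[symmetric])
lemma Ecyc_power: "x \<in> Ecyc p \<Longrightarrow> x ^ n \<in> Ecyc p"
  by (induction n) (auto intro: Ecyc_mult simp: Ecyc_rat[of 1, simplified])

lemma ev_in_Ecyc: "x \<in> Ecyc p \<Longrightarrow> ev f x \<in> Ecyc p"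
proof (induction f)
  case 0 thus ?case using Ecyc_rat[of 0 p] by (simp add: ev_0)
next
  case (pCons a f) thus ?case by (simp add: ev_pCons Ecyc_add Ecyc_mult Ecyc_rat)
qed

lemma to_ac_rat: "(to_ac (q::rat) :: qbar) = of_rat q"
proof (cases q)
  case (Fract a b)
  thus ?thesis by (simp add: Fract_of_int_quotient of_rat_divide)
qed

lemma inverse_Ecyc_aux:
  assumes y: "y \<in> Ecyc p" "y \<noteq> 0"
  shows "h \<noteq> 0 \<Longrightarrow> ev h y = 0 \<Longrightarrow> inverse y \<in> Ecyc p"
proof (induction "degree h" arbitrary: h rule: less_induct)
  case less
  obtain h0 w where hw: "h = pCons h0 w" by (cases h) auto
  show ?case
  proof (cases "h0 = 0")
    case True
    hence wnz: "w \<noteq> 0" using less.prems hw by auto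
    have "y * ev w y = 0" using less.prems(2) hw True by (simp add: ev_pCons)
    hence "ev w y = 0" using y(2) by simp
    moreover have "degree w < degree h" using hw wnz by (simp add: degree_pCons_eq)
    ultimately show ?thesis using less.hyps wnz by blast
  next
    case False
    have "of_rat h0 + y * ev w y = 0" using less.prems(2) hw by (simp add: ev_pCons)
    hence "y * (- ev w y / of_rat h0) = 1" using False by (simp add: field_simps add_eq_0_iff)
    hence "inverse y = - ev w y / of_rat h0" by (metis inverse_unique)
    also have "\<dots> = of_rat (- inverse h0) * ev w y" by (simp add: of_rat_minus of_rat_inverse divide_inverse)
    also have "\<dots> = ev (smult (- inverse h0) w) y" by (simp only: ev_smult)
    finally show ?thesis using ev_in_Ecyc[OF y(1)] by simp
  qed
qed

lemma inverse_Ecyc: assumes "y \<in> Ecyc p" shows "inverse y \<in> Ecyc p"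
proof (cases "y = 0")
  case True thus ?thesis using Ecyc_rat[of 0 p] by simp
next
  case False
  obtain h :: "rat poly" where h: "h \<noteq> 0" "poly (map_poly to_ac h) y = 0" using alg_closure_algebraic by blast
  have "map_poly to_ac h = map_poly of_rat h" by (intro map_poly_cong) (simp add: to_ac_rat)
  hence "ev h y = 0" using h(2) unfolding ev_def by simp
  thus ?thesis using inverse_Ecyc_aux[OF assms False h(1)] by blast
qed

lemma subfield_Ecyc: "is_subfield (Ecyc p)"
  unfolding is_subfield_def
  using Ecyc_rat[of 0 p] Ecyc_rat[of 1 p] by (auto intro: Ecyc_add Ecyc_diff Ecyc_mult inverse_Ecyc)

lemma subfield_rat: assumes "is_subfield K" shows "of_rat q \<in> K"
proof -
  have n: "of_nat n \<in> K" for n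
    by (induction n) (use assms in \<open>auto simp: is_subfield_def\<close>)
  have i: "of_int n \<in> K" for n
  proof (cases "n \<ge> 0")
    case True thus ?thesis using n[of "nat n"] by (metis of_int_of_nat_eq nat_0_le)
  next
    case False
    have "of_int n = (0::qbar) - of_nat (nat (-n))" using False by simp
    thus ?thesis using n[of "nat (-n)"] assms unfolding is_subfield_def by metis
  qed
  show ?thesis
  proof (cases q)
    case (Fract a b)
    hence "of_rat q = of_int a * inverse (of_int b :: qbar)" by (simp add: of_rat_rat divide_inverse)
    thus ?thesis using i assms unfolding is_subfield_def by metis
  qed
qed

lemma subfield_ev: assumes "is_subfield K" "x \<in> K" shows "ev f x \<in> K"
proof (induction f)
  case 0 thus ?case using assms(1) by (simp add: ev_0 is_subfield_def)
next
  case (pCons a f) thus ?case using assms subfield_rat[OF assms(1), of a]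
    by (simp add: ev_pCons is_subfield_def)
qed

lemma cyclotomic_Ecyc: "cyclotomic_field p = Ecyc p"
proof
  show "cyclotomic_field p \<subseteq> Ecyc p"
    unfolding cyclotomic_field_def gen_field_def using subfield_Ecyc Ecyc_zeta by blast
  show "Ecyc p \<subseteq> cyclotomic_field p"
    unfolding cyclotomic_field_def gen_field_def Ecyc_def using subfield_ev by blast
qed

section \<open>The automorphisms sigma_k\<close>

definition sig :: "nat \<Rightarrow> nat \<Rightarrow> qbar \<Rightarrow> qbar" where
  "sig p k y = ev (SOME f. y = ev f (zeta p)) (zeta p ^ k)"

lemma sig_ev: assumes pr: "prime p" and k: "\<not> p dvd k" shows "sig p k (ev f (zeta p)) = ev f (zeta p ^ k)"
proof -
  define g where "g = (SOME g. ev f (zeta p) = ev g (zeta p))"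
  have "ev f (zeta p) = ev g (zeta p)" unfolding g_def by (rule someI[of _ f]) (rule refl)
  hence "ev (g - f) (zeta p) = 0" by (simp add: ev_diff)
  hence "poly (map_poly of_rat (g - f)) (zeta p) = 0" unfolding ev_def .
  hence "poly (map_poly of_rat (g - f)) (zeta p ^ k) = 0" by (rule vanish_pow[OF pr k])
  hence "ev (g - f) (zeta p ^ k) = 0" unfolding ev_def .
  hence "ev g (zeta p ^ k) = ev f (zeta p ^ k)" by (simp add: ev_diff)
  thus ?thesis unfolding sig_def g_def by simp
qed

context
  fixes p :: nat
  assumes pr: "prime p"
begin

lemma sig_add: "\<not> p dvd k \<Longrightarrow> x \<in> Ecyc p \<Longrightarrow> y \<in> Ecyc p \<Longrightarrow> sig p k (x + y) = sig p k x + sig p k y"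
  by (elim EcycE) (simp add: ev_add[symmetric] sig_ev[OF pr])

lemma sig_diff: "\<not> p dvd k \<Longrightarrow> x \<in> Ecyc p \<Longrightarrow> y \<in> Ecyc p \<Longrightarrow> sig p k (x - y) = sig p k x - sig p k y"
  by (elim EcycE) (simp add: ev_diff[symmetric] sig_ev[OF pr])

lemma sig_mult: "\<not> p dvd k \<Longrightarrow> x \<in> Ecyc p \<Longrightarrow> y \<in> Ecyc p \<Longrightarrow> sig p k (x * y) = sig p k x * sig p k y"
  by (elim EcycE) (simp add: ev_mult[symmetric] sig_ev[OF pr])

lemma sig_rat: "\<not> p dvd k \<Longrightarrow> sig p k (of_rat q) = of_rat q"
  using sig_ev[OF pr, of k "[:q:]"] by (simp add: ev_const)

lemma sig_zeta: "\<not> p dvd k \<Longrightarrow> sig p k (zeta p) = zeta p ^ k"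
  using sig_ev[OF pr, of k "[:0,1:]"] by (simp add: ev_X)

lemma sig_Ecyc: "\<not> p dvd k \<Longrightarrow> x \<in> Ecyc p \<Longrightarrow> sig p k x \<in> Ecyc p"
  by (elim EcycE) (simp add: sig_ev[OF pr] ev_in_Ecyc Ecyc_power Ecyc_zeta)

lemma sig_power: "\<not> p dvd k \<Longrightarrow> x \<in> Ecyc p \<Longrightarrow> sig p k (x ^ n) = sig p k x ^ n"
  by (induction n) (simp_all add: sig_rat[of k 1, simplified] sig_mult Ecyc_power)

lemma sig_ev_gen: "\<not> p dvd k \<Longrightarrow> x \<in> Ecyc p \<Longrightarrow> sig p k (ev f x) = ev f (sig p k x)"
proof (induction f)
  case 0 thus ?case using sig_rat[of k 0] by (simp add: ev_0)
next
  case (pCons a f)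
  thus ?case by (simp add: ev_pCons sig_add sig_mult sig_rat Ecyc_rat Ecyc_mult ev_in_Ecyc)
qed

lemma sig_comp:
  assumes k: "\<not> p dvd k" and m: "\<not> p dvd m" and y: "y \<in> Ecyc p"
  shows "sig p k (sig p m y) = sig p (k * m) y"
proof -
  obtain f where f: "y = ev f (zeta p)" using y by (rule EcycE)
  have km: "\<not> p dvd k * m" using k m pr prime_dvd_mult_iff by blast
  have "sig p k (sig p m y) = sig p k (ev f (zeta p ^ m))" using f sig_ev[OF pr m] by simp
  also have "\<dots> = ev f (sig p k (zeta p ^ m))" using sig_ev_gen[OF k] Ecyc_power[OF Ecyc_zeta] by simp
  also have "sig p k (zeta p ^ m) = zeta p ^ (k * m)"
    using sig_power[OF k Ecyc_zeta] sig_zeta[OF k] by (simp add: power_mult)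
  finally show ?thesis using f sig_ev[OF pr km] by simp
qed

lemma sig_one: "y \<in> Ecyc p \<Longrightarrow> sig p 1 y = y"
proof -
  assume "y \<in> Ecyc p"
  then obtain f where f: "y = ev f (zeta p)" by (rule EcycE)
  have "\<not> p dvd 1" using pr by (metis prime_gt_1_nat nat_dvd_not_less zero_less_one)
  thus ?thesis using f sig_ev[OF pr] by simp
qed

lemma sig_mod: assumes k: "\<not> p dvd k" and y: "y \<in> Ecyc p" shows "sig p k y = sig p (k mod p) y"
proof -
  obtain f where f: "y = ev f (zeta p)" using y by (rule EcycE)
  have k': "\<not> p dvd (k mod p)" using k by (simp add: dvd_mod_iff)
  show ?thesis using f sig_ev[OF pr k] sig_ev[OF pr k'] zeta_pow_mod[OF pr, of k] by simp
qed

lemma fixed_rat: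
  assumes y: "y \<in> Ecyc p" and fx: "\<forall>k\<in>{1..<p}. sig p k y = y"
  shows "y \<in> \<rat>"
proof -
  obtain f where f: "y = ev f (zeta p)" using y by (rule EcycE)
  let ?c = "\<lambda>i. of_rat (coeff f i) :: qbar"
  have evs: "ev f x = (\<Sum>i\<le>degree f. ?c i * x ^ i)" for x
    unfolding ev_def poly_altdef by (simp add: coeff_map_poly degree_map_poly)
  have kd: "k \<in> {1..<p} \<Longrightarrow> \<not> p dvd k" for k by (auto dest: dvd_imp_le)
  have "(\<Sum>k\<in>{1..<p}. sig p k y) = (\<Sum>k\<in>{1..<p}. y)" using fx by simp
  hence "of_nat (p - 1) * y = (\<Sum>k\<in>{1..<p}. ev f (zeta p ^ k))"
    using f sig_ev[OF pr] kd by simp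
  also have "\<dots> = (\<Sum>k\<in>{1..<p}. \<Sum>i\<le>degree f. ?c i * (zeta p ^ i) ^ k)"
    unfolding evs by (simp add: power_mult[symmetric] mult.commute)
  also have "\<dots> = (\<Sum>i\<le>degree f. ?c i * (\<Sum>k\<in>{1..<p}. (zeta p ^ i) ^ k))"
    by (subst sum.swap) (simp add: sum_distrib_left)
  also have "\<dots> \<in> \<rat>"
  proof (rule Rats_sum, rule Rats_mult)
    fix i show "?c i \<in> \<rat>" by simp
    show "(\<Sum>k\<in>{1..<p}. (zeta p ^ i) ^ k) \<in> \<rat>"
    proof (cases "p dvd i")
      case True thus ?thesis using sum_root_pow_dvd[OF pr True] by (metis Rats_of_nat)
    next
      case False
      have "(-1::qbar) \<in> \<rat>" by simp
      thus ?thesis using sum_root_pow1[OF pr False] by metis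
    qed
  qed
  finally have "of_nat (p - 1) * y \<in> \<rat>" .
  moreover have "of_nat (p - 1) \<noteq> (0::qbar)" using prime_gt_1_nat[OF pr] by simp
  ultimately show ?thesis by (metis Rats_divide Rats_of_nat nonzero_mult_div_cancel_left)
qed

end


lemma sig_fix_g_all:
  assumes pr: "prime p" and g: "residue_primroot p g" and y: "y \<in> Ecyc p" and fx: "sig p g y = y"
  shows "\<forall>k\<in>{1..<p}. sig p k y = y"
proof -
  have p1: "p > 1" using prime_gt_1_nat[OF pr] .
  have cg: "coprime p g" using g by (simp add: residue_primroot_def)
  have ng: "\<not> p dvd g" using cg p1 by (metis coprime_absorb_left nat_dvd_not_less zero_less_one not_less_iff_gr_or_eq coprime_commute dvd_refl)
  have ngj: "\<not> p dvd g ^ j" for j using ng pr by (metis prime_dvd_power)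
  have gj: "sig p (g ^ j) y = y" for j
  proof (induction j)
    case 0 thus ?case using sig_one[OF pr y] by simp
  next
    case (Suc j)
    have "sig p (g ^ Suc j) y = sig p g (sig p (g ^ j) y)" using sig_comp[OF pr ng ngj y] by simp
    thus ?case using Suc fx by simp
  qed
  show ?thesis
  proof
    fix k assume k: "k \<in> {1..<p}"
    have nk: "\<not> p dvd k" using k by (auto dest: dvd_imp_le)
    have "k \<in> totatives p" using k nk pr prime_imp_coprime[OF pr nk]
      by (auto simp: totatives_def coprime_commute)
    moreover have "(\<lambda>i. g ^ i mod p) ` {..<totient p} = totatives p"
      using residue_primroot_is_generator[OF p1 g] unfolding bij_betw_def by blast
    ultimately obtain j where j: "g ^ j mod p = k" by (metis (no_types, lifting) imageE)
    have "sig p k y = sig p (g ^ j mod p) y" using j by simp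
    also have "\<dots> = sig p (g ^ j) y" using sig_mod[OF pr ngj y] by simp
    finally show "sig p k y = y" using gj by simp
  qed
qed

lemma QF_norm:
  assumes "quadratic_field K"
  shows "\<exists>a. a \<notin> \<rat> \<and> a * a \<in> \<rat> \<and> K = {of_rat x + of_rat y * a | x y. True}"
proof -
  obtain b where b: "b \<notin> \<rat>" "K = {of_rat x + of_rat y * b | x y. True}"
    using assms unfolding quadratic_field_def by blast
  have sf: "is_subfield K" using assms unfolding quadratic_field_def by blast
  have bK: "b \<in> K" unfolding b(2) by (rule CollectI, rule exI[of _ 0], rule exI[of _ 1]) simp
  hence "b * b \<in> K" using sf unfolding is_subfield_def by blast
  then obtain u w where uw: "b * b = of_rat u + of_rat w * b" unfolding b(2) by blast
  define a where "a = b - of_rat (w / 2)"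
  have "a * a = b * b - of_rat w * b + of_rat (w/2) * of_rat (w/2)"
    unfolding a_def by (simp add: algebra_simps of_rat_divide)
  also have "\<dots> = of_rat (u + (w/2) * (w/2))" using uw by (simp only: of_rat_add of_rat_mult) simp
  finally have aa: "a * a \<in> \<rat>" by simp
  have an: "a \<notin> \<rat>"
  proof
    assume "a \<in> \<rat>"
    hence "a + of_rat (w/2) \<in> \<rat>" by simp
    thus False using b(1) unfolding a_def by simp
  qed
  have "K = {of_rat x + of_rat y * a | x y. True}"
  proof -
    have "of_rat x + of_rat y * b = of_rat (x + y * (w/2)) + of_rat y * a" for x y
      unfolding a_def by (simp add: of_rat_add of_rat_mult of_rat_divide algebra_simps)
    moreover have "of_rat x + of_rat y * a = of_rat (x - y * (w/2)) + of_rat y * b" for x y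
      unfolding a_def by (simp add: of_rat_diff of_rat_mult of_rat_divide algebra_simps)
    ultimately show ?thesis unfolding b(2) by blast
  qed
  thus ?thesis using an aa by blast
qed

lemma sig_sq:
  assumes pr: "prime p" and k: "\<not> p dvd k" and a: "a \<in> Ecyc p" and aa: "a * a \<in> \<rat>"
  shows "sig p k a = a \<or> sig p k a = - a"
proof -
  obtain r where r: "a * a = of_rat r" using aa by (auto elim: Rats_cases)
  have "sig p k a * sig p k a = a * a" using sig_mult[OF pr k a a] r sig_rat[OF pr k] by simp
  hence "(sig p k a - a) * (sig p k a + a) = 0" by (simp add: algebra_simps)
  hence "sig p k a - a = 0 \<or> sig p k a + a = 0" by simp
  thus ?thesis by (auto simp: eq_neg_iff_add_eq_0)
qed

lemma sig_g_neg:
  assumes pr: "prime p" and g: "residue_primroot p g" and a: "a \<in> Ecyc p" and aa: "a * a \<in> \<rat>"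
    and an: "a \<notin> \<rat>"
  shows "sig p g a = - a"
proof -
  have p1: "p > 1" using prime_gt_1_nat[OF pr] .
  have cg: "coprime p g" using g by (simp add: residue_primroot_def)
  have ng: "\<not> p dvd g" using cg p1 by (metis coprime_absorb_left nat_dvd_not_less zero_less_one not_less_iff_gr_or_eq coprime_commute dvd_refl)
  have "sig p g a \<noteq> a"
  proof
    assume "sig p g a = a"
    hence "a \<in> \<rat>" using sig_fix_g_all[OF pr g a] fixed_rat[OF pr a] by blast
    with an show False by simp
  qed
  thus ?thesis using sig_sq[OF pr ng a aa] by blast
qed

lemma quad_unique:
  assumes pr: "prime p" and K1: "quadratic_field K1" "K1 \<subseteq> Ecyc p"
    and K2: "quadratic_field K2" "K2 \<subseteq> Ecyc p"
  shows "K1 = K2"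
proof -
  obtain g where g: "residue_primroot p g" using prime_primitive_root_exists[OF prime_gt_1_nat[OF pr] pr] by blast
  have p1: "p > 1" using prime_gt_1_nat[OF pr] .
  have cg: "coprime p g" using g by (simp add: residue_primroot_def)
  have ng: "\<not> p dvd g" using cg p1 by (metis coprime_absorb_left nat_dvd_not_less zero_less_one not_less_iff_gr_or_eq coprime_commute dvd_refl)
  obtain a where a: "a \<notin> \<rat>" "a * a \<in> \<rat>" "K1 = {of_rat x + of_rat y * a | x y. True}" using QF_norm[OF K1(1)] by blast
  obtain b where b: "b \<notin> \<rat>" "b * b \<in> \<rat>" "K2 = {of_rat x + of_rat y * b | x y. True}" using QF_norm[OF K2(1)] by blast
  have aE: "a \<in> Ecyc p" using K1(2) a(3) by (force intro: exI[of _ 0] exI[of _ 1])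
  have bE: "b \<in> Ecyc p" using K2(2) b(3) by (force intro: exI[of _ 0] exI[of _ 1])
  have "sig p g (a * b) = a * b"
    using sig_mult[OF pr ng aE bE] sig_g_neg[OF pr g aE a(2,1)] sig_g_neg[OF pr g bE b(2,1)] by simp
  hence "a * b \<in> \<rat>" using sig_fix_g_all[OF pr g] fixed_rat[OF pr] Ecyc_mult[OF aE bE] by blast
  then obtain r1 where r1: "a * b = of_rat r1" by (auto elim: Rats_cases)
  obtain r2 where r2: "a * a = of_rat r2" using a(2) by (auto elim: Rats_cases)
  have a0: "a \<noteq> 0" using a(1) by auto
  have b0: "b \<noteq> 0" using b(1) by auto
  have r20: "r2 \<noteq> 0" using r2 a0 by auto
  have r10: "r1 \<noteq> 0" using r1 a0 b0 by auto
  have bq: "b = of_rat (r1 / r2) * a"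
  proof -
    have "of_rat (r1 / r2) * a = (a * b) * a / (a * a)" using r1 r2 by (simp add: of_rat_divide)
    also have "\<dots> = b" using a0 by (simp add: field_simps)
    finally show ?thesis by simp
  qed
  show ?thesis
  proof -
    have "of_rat x + of_rat y * b = of_rat x + of_rat (y * (r1/r2)) * a" for x y
      unfolding bq by (simp add: of_rat_mult of_rat_divide)
    moreover have "of_rat x + of_rat y * a = of_rat x + of_rat (y * (r2/r1)) * b" for x y
      unfolding bq using r10 r20 by (simp add: of_rat_mult of_rat_divide field_simps)
    ultimately show ?thesis unfolding a(3) b(3) by blast
  qed
qed

lemma subfield_quad:
  assumes an: "a \<notin> \<rat>" and aa: "a * a \<in> \<rat>"
  shows "is_subfield {of_rat x + of_rat y * a | x y. True}" (is "is_subfield ?K")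
proof -
  obtain g where g: "a * a = of_rat g" using aa by (auto elim: Rats_cases)
  have mem: "of_rat x + of_rat y * a \<in> ?K" for x y by blast
  have z: "0 \<in> ?K" using mem[of 0 0] by simp
  have o: "1 \<in> ?K" using mem[of 1 0] by simp
  have cl: "u + v \<in> ?K \<and> u - v \<in> ?K \<and> u * v \<in> ?K" if uK: "u \<in> ?K" and vK: "v \<in> ?K" for u v
  proof -
    obtain x y where u: "u = of_rat x + of_rat y * a" using uK by blast
    obtain x' y' where v: "v = of_rat x' + of_rat y' * a" using vK by blast
    have "u + v = of_rat (x + x') + of_rat (y + y') * a" unfolding u v by (simp add: of_rat_add algebra_simps)
    moreover have "u - v = of_rat (x - x') + of_rat (y - y') * a" unfolding u v by (simp add: of_rat_diff algebra_simps)
    moreover have "u * v = of_rat (x * x' + y * y' * g) + of_rat (x * y' + y * x') * a"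
    proof -
      have "u * v = of_rat x * of_rat x' + of_rat y * of_rat y' * (a * a) + (of_rat x * of_rat y' + of_rat y * of_rat x') * a"
        unfolding u v by (simp add: algebra_simps)
      thus ?thesis unfolding g by (simp add: of_rat_add of_rat_mult)
    qed
    ultimately show ?thesis by blast
  qed
  have inv: "inverse u \<in> ?K" if uK: "u \<in> ?K" for u
  proof -
    obtain x y where u: "u = of_rat x + of_rat y * a" using uK by blast
    show ?thesis
    proof (cases "x = 0 \<and> y = 0")
      case True thus ?thesis using z u by simp
    next
      case False
      define N where "N = x * x - y * y * g"
      have N0: "N \<noteq> 0"
      proof
        assume "N = 0"
        hence xx: "x * x = y * y * g" unfolding N_def by simp
        show False
        proof (cases "y = 0")
          case True thus False using xx False by simp
        next
          case y0: False
          have "(of_rat (x / y) :: qbar) * of_rat (x / y) = a * a"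
            using xx y0 g by (simp add: of_rat_divide of_rat_mult[symmetric] field_simps)
          hence "(of_rat (x / y) - a) * (of_rat (x / y) + a) = 0" by (simp add: algebra_simps)
          hence "of_rat (x / y) - a = 0 \<or> of_rat (x / y) + a = 0" by simp
          hence "a = of_rat (x / y) \<or> a = - of_rat (x / y)" by (auto simp: eq_neg_iff_add_eq_0 add.commute)
          thus False using an by (auto simp del: of_rat_minus simp: of_rat_minus[symmetric])
        qed
      qed
      have "u * (of_rat (x / N) + of_rat (- y / N) * a) = 1"
      proof -
        have "u * (of_rat (x / N) + of_rat (- y / N) * a)
            = (of_rat x * of_rat x - of_rat y * of_rat y * (a * a)) / of_rat N"
          unfolding u using N0 by (simp add: of_rat_divide of_rat_minus field_simps)
        also have "\<dots> = 1" unfolding g N_def using N0[unfolded N_def] by (simp add: of_rat_mult[symmetric] of_rat_diff[symmetric])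
        finally show ?thesis .
      qed
      hence "inverse u = of_rat (x / N) + of_rat (- y / N) * a" by (metis inverse_unique)
      thus ?thesis by blast
    qed
  qed
  show ?thesis unfolding is_subfield_def using z o cl inv by blast
qed


lemma Leg_vals: "Legendre a m \<in> {-1, 0, 1}" unfolding Legendre_def by auto

lemma small_cong_eq:
  assumes "x \<in> {-1,0,1::int}" "y \<in> {-1,0,1}" "[x = y] (mod int p)" "2 < p"
  shows "x = y"
proof (rule ccontr)
  assume ne: "x \<noteq> y"
  have "int p dvd (x - y)" using assms(3) by (simp add: cong_iff_dvd_diff)
  hence "\<bar>int p\<bar> \<le> \<bar>x - y\<bar>" using ne by (intro dvd_imp_le_int) auto
  moreover have "\<bar>x - y\<bar> \<le> 2" using assms(1,2) by auto
  ultimately show False using assms(4) by simp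
qed

lemma Leg_mult:
  assumes pr: "prime p" and p2: "2 < p"
  shows "Legendre (a*b) (int p) = Legendre a (int p) * Legendre b (int p)"
proof -
  let ?e = "(p - 1) div 2"
  have "[Legendre (a*b) (int p) = (a*b) ^ ?e] (mod int p)" by (rule euler_criterion[OF pr p2])
  moreover have "[Legendre a (int p) * Legendre b (int p) = a ^ ?e * b ^ ?e] (mod int p)"
    by (intro cong_mult euler_criterion[OF pr p2])
  ultimately have "[Legendre (a*b) (int p) = Legendre a (int p) * Legendre b (int p)] (mod int p)"
    by (metis cong_sym cong_trans power_mult_distrib)
  moreover have "Legendre a (int p) * Legendre b (int p) \<in> {-1,0,1}"
    using Leg_vals[of a "int p"] Leg_vals[of b "int p"] by auto
  ultimately show ?thesis using small_cong_eq Leg_vals p2 by blast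
qed

lemma Leg_mod: "Legendre (a mod int p) (int p) = Legendre a (int p)"
  unfolding Legendre_def by (simp add: cong_def QR_mod)

lemma Leg_sq: assumes "\<not> int p dvd a" shows "Legendre a (int p) * Legendre a (int p) = 1"
proof -
  have "\<not> [a = 0] (mod int p)" using assms by (simp add: cong_0_iff)
  thus ?thesis unfolding Legendre_def by auto
qed

lemma Leg_nonres: assumes "\<not> int p dvd a" "\<not> QuadRes (int p) a" shows "Legendre a (int p) = -1"
proof -
  have "\<not> [a = 0] (mod int p)" using assms by (simp add: cong_0_iff)
  thus ?thesis using assms unfolding Legendre_def by auto
qed

section \<open>Gauss sum\<close>

definition Lg :: "nat \<Rightarrow> nat \<Rightarrow> int" where "Lg p k = Legendre (int k) (int p)"

definition gpoly :: "nat \<Rightarrow> rat poly" where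
  "gpoly p = (\<Sum>k\<in>{1..<p}. monom (of_int (Lg p k)) k)"

definition Gs :: "nat \<Rightarrow> qbar" where "Gs p = ev (gpoly p) (zeta p)"

lemma ev_monom: "ev (monom c k) x = of_rat c * x ^ k"
  unfolding ev_def by (simp add: map_poly_monom poly_monom)

lemma ev_sum: "ev (sum f S) x = (\<Sum>s\<in>S. ev (f s) x)"
  by (induction S rule: infinite_finite_induct) (simp_all add: ev_0 ev_add)

lemma ev_gpoly: "ev (gpoly p) x = (\<Sum>k\<in>{1..<p}. of_int (Lg p k) * x ^ k)"
  unfolding gpoly_def ev_sum ev_monom by simp

lemma coeff_gpoly: "coeff (gpoly p) i = (if i \<in> {1..<p} then of_int (Lg p i) else 0)"
  unfolding gpoly_def by (simp add: coeff_sum coeff_monom)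

lemma Lg_1: "prime p \<Longrightarrow> Lg p 1 = 1"
proof -
  assume pr: "prime p"
  have "\<not> [1 = 0] (mod int p)" using prime_gt1_int[OF pr] by (simp add: cong_def)
  moreover have "QuadRes (int p) 1" unfolding QR_cong by (rule exI[of _ 1]) simp
  ultimately show ?thesis unfolding Lg_def Legendre_def by simp
qed

lemma Gs_nz: assumes pr: "prime p" shows "Gs p \<noteq> 0"
proof
  assume "Gs p = 0"
  hence "poly (map_poly of_rat (gpoly p)) (zeta p) = 0" unfolding Gs_def ev_def .
  hence "Phi p dvd gpoly p" by (rule vanish[OF pr])
  then obtain w where w: "gpoly p = Phi p * w" by (elim dvdE)
  have p1: "p > 1" using prime_gt_1_nat[OF pr] .
  have c1: "coeff (gpoly p) 1 = 1" using p1 Lg_1[OF pr] by (simp add: coeff_gpoly)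
  hence gnz: "gpoly p \<noteq> 0" by auto
  hence wnz: "w \<noteq> 0" and Pnz: "(Phi p :: rat poly) \<noteq> 0" using w by auto
  have "degree (gpoly p) \<le> p - 1" by (rule degree_le) (auto simp: coeff_gpoly)
  moreover have "degree (gpoly p) = (p - 1) + degree w"
    using w wnz Pnz degree_mult_eq[of "Phi p" w] degree_Phi[of p, where 'a=rat] p1 by simp
  ultimately have "degree w = 0" by simp
  then obtain c where c: "w = [:c:]" by (metis degree_eq_zeroE)
  have "coeff (gpoly p) 0 = 0" by (simp add: coeff_gpoly)
  moreover have "coeff (gpoly p) 0 = c" using w c p1 by (simp add: coeff_Phi)
  ultimately have "c = 0" by simp
  thus False using w c gnz by simp
qed

lemma mult_mod_bij:
  fixes p m :: nat
  assumes pr: "prime p" and m: "\<not> p dvd m"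
  shows "bij_betw (\<lambda>k. (m * k) mod p) {1..<p} {1..<p}"
proof -
  let ?h = "\<lambda>k. (m * k) mod p"
  have sub: "?h ` {1..<p} \<subseteq> {1..<p}"
  proof
    fix y assume "y \<in> ?h ` {1..<p}"
    then obtain k where k: "k \<in> {1..<p}" "y = (m * k) mod p" by blast
    have "\<not> p dvd k" using k(1) by (auto simp: nat_dvd_not_less)
    hence "\<not> p dvd m * k" using m pr prime_dvd_mult_iff by blast
    hence "y \<noteq> 0" using k(2) by (simp add: dvd_eq_mod_eq_0)
    moreover have "y < p" using k(2) prime_gt_1_nat[OF pr] by simp
    ultimately show "y \<in> {1..<p}" by simp
  qed
  have cm: "coprime m p" using prime_imp_coprime[OF pr m] by (simp add: coprime_commute)
  have inj: "inj_on ?h {1..<p}"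
  proof
    fix x y assume xy: "x \<in> {1..<p}" "y \<in> {1..<p}" "?h x = ?h y"
    hence "[m * x = m * y] (mod p)" by (simp add: cong_def)
    hence "[x = y] (mod p)" using cong_mult_lcancel_nat[OF cm] by simp
    thus "x = y" using xy(1,2) by (auto intro: cong_less_modulus_unique_nat)
  qed
  have "?h ` {1..<p} = {1..<p}" by (rule endo_inj_surj) (use sub inj in auto)
  thus ?thesis using inj unfolding bij_betw_def by blast
qed

lemma sig_Gs:
  assumes pr: "prime p" and p2: "2 < p" and m: "\<not> p dvd m"
  shows "sig p m (Gs p) = of_int (Lg p m) * Gs p"
proof -
  let ?h = "\<lambda>k. (m * k) mod p"
  let ?F = "\<lambda>j. of_int (Lg p j) * zeta p ^ j :: qbar"
  have mi: "\<not> int p dvd int m" using m by simp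
  have Lk: "Lg p k = Lg p m * Lg p (?h k)" for k
  proof -
    have "Lg p (?h k) = Legendre (int m * int k) (int p)"
      unfolding Lg_def using Leg_mod[of "int m * int k" p] by (simp add: zmod_int of_nat_mult)
    also have "\<dots> = Lg p m * Lg p k" unfolding Lg_def by (rule Leg_mult[OF pr p2])
    finally have "Lg p m * Lg p (?h k) = (Lg p m * Lg p m) * Lg p k" by (simp add: ac_simps)
    thus ?thesis using Leg_sq[OF mi] unfolding Lg_def by simp
  qed
  have "sig p m (Gs p) = ev (gpoly p) (zeta p ^ m)" unfolding Gs_def by (rule sig_ev[OF pr m])
  also have "\<dots> = (\<Sum>k\<in>{1..<p}. of_int (Lg p k) * (zeta p ^ m) ^ k)" by (rule ev_gpoly)
  also have "\<dots> = (\<Sum>k\<in>{1..<p}. of_int (Lg p m) * ?F (?h k))"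
  proof (rule sum.cong[OF refl])
    fix k
    have "(zeta p ^ m) ^ k = zeta p ^ (?h k)" using zeta_pow_mod[OF pr, of "m * k"] by (simp add: power_mult)
    thus "of_int (Lg p k) * (zeta p ^ m) ^ k = of_int (Lg p m) * ?F (?h k)" by (subst Lk) simp
  qed
  also have "\<dots> = of_int (Lg p m) * (\<Sum>k\<in>{1..<p}. ?F (?h k))" by (simp add: sum_distrib_left)
  also have "(\<Sum>k\<in>{1..<p}. ?F (?h k)) = (\<Sum>k\<in>{1..<p}. ?F k)"
    by (rule sum.reindex_bij_betw[OF mult_mod_bij[OF pr m]])
  also have "\<dots> = Gs p" unfolding Gs_def ev_gpoly ..
  finally show ?thesis .
qed

lemma Gs_props:
  assumes pr: "prime p" and p2: "2 < p" and n: "\<not> p dvd n" "Lg p n = -1"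
  shows "Gs p \<in> Ecyc p" "Gs p \<notin> \<rat>" "Gs p * Gs p \<in> \<rat>"
proof -
  show GE: "Gs p \<in> Ecyc p" unfolding Gs_def by (rule EcycI) (rule refl)
  show "Gs p \<notin> \<rat>"
  proof
    assume "Gs p \<in> \<rat>"
    then obtain r where r: "Gs p = of_rat r" by (auto elim: Rats_cases)
    have "sig p n (Gs p) = Gs p" using r sig_rat[OF pr n(1)] by simp
    moreover have "sig p n (Gs p) = - Gs p" using sig_Gs[OF pr p2 n(1)] n(2) by simp
    ultimately show False using Gs_nz[OF pr] by simp
  qed
  have "\<forall>k\<in>{1..<p}. sig p k (Gs p * Gs p) = Gs p * Gs p"
  proof
    fix k assume k: "k \<in> {1..<p}"
    hence nk: "\<not> p dvd k" by (auto simp: nat_dvd_not_less)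
    have "sig p k (Gs p * Gs p) = of_int (Lg p k * Lg p k) * (Gs p * Gs p)"
      using sig_mult[OF pr nk GE GE] sig_Gs[OF pr p2 nk] by (simp add: algebra_simps)
    moreover have "Lg p k * Lg p k = 1" unfolding Lg_def by (rule Leg_sq) (use nk in simp)
    ultimately show "sig p k (Gs p * Gs p) = Gs p * Gs p" by simp
  qed
  thus "Gs p * Gs p \<in> \<rat>" using fixed_rat[OF pr Ecyc_mult[OF GE GE]] by blast
qed

theorem Qp_spec:
  assumes pr: "prime p" and p2: "2 < p" and v: "v \<in> {1..<int p}" "\<not> QuadRes (int p) v"
  shows "\<exists>a. a \<notin> \<rat> \<and> a * a \<in> \<rat> \<and> Qp p = {of_rat x + of_rat y * a | x y. True}"
proof -
  define n where "n = nat v"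
  have nv: "int n = v" using v(1) unfolding n_def by simp
  have nd: "\<not> p dvd n" using v(1) nv by (auto simp: nat_dvd_not_less)
  have Ln: "Lg p n = -1" unfolding Lg_def nv
    by (rule Leg_nonres) (use v nv nd in \<open>auto simp: int_dvd_int_iff[symmetric]\<close>)
  note G = Gs_props[OF pr p2 nd Ln]
  let ?K = "{of_rat x + of_rat y * Gs p | x y. True}"
  have qK: "quadratic_field ?K" unfolding quadratic_field_def using subfield_quad[OF G(2,3)] G(2) by blast
  have KE: "?K \<subseteq> Ecyc p" using G(1) by (auto intro: Ecyc_add Ecyc_mult Ecyc_rat)
  have ex1: "\<exists>!K. quadratic_field K \<and> K \<subseteq> cyclotomic_field p"
    unfolding cyclotomic_Ecyc using qK KE quad_unique[OF pr] by blast
  have "quadratic_field (Qp p) \<and> Qp p \<subseteq> cyclotomic_field p"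
    unfolding Qp_def by (rule theI'[OF ex1])
  thus ?thesis using QF_norm by blast
qed


context
  fixes p :: nat
  assumes pr: "prime p"
begin

interpretation Gp: group "PG p" by (rule group_PG[OF pr])

lemma pm_closed: "x \<in> PGL2 p \<Longrightarrow> y \<in> PGL2 p \<Longrightarrow> pmul p x y \<in> PGL2 p"
  using Gp.m_closed by simp

lemma pm_assoc: "x \<in> PGL2 p \<Longrightarrow> y \<in> PGL2 p \<Longrightarrow> z \<in> PGL2 p \<Longrightarrow> pmul p (pmul p x y) z = pmul p x (pmul p y z)"
  using Gp.m_assoc by simp

lemma pone_closed: "pone p \<in> PGL2 p" using Gp.one_closed by simp

lemma pm_one_l: "x \<in> PGL2 p \<Longrightarrow> pmul p (pone p) x = x" using Gp.l_one by simp
lemma pm_one_r: "x \<in> PGL2 p \<Longrightarrow> pmul p x (pone p) = x" using Gp.r_one by simp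

lemma pi_closed: "x \<in> PGL2 p \<Longrightarrow> pinv p x \<in> PGL2 p"
  using Gp.inv_closed inv_PG[OF pr] by fastforce

lemma pm_inv_r: "x \<in> PGL2 p \<Longrightarrow> pmul p x (pinv p x) = pone p"
  using Gp.r_inv inv_PG[OF pr] by fastforce

lemma pm_inv_l: "x \<in> PGL2 p \<Longrightarrow> pmul p (pinv p x) x = pone p"
  using Gp.l_inv inv_PG[OF pr] by fastforce

lemma pm_cancel1: "x \<in> PGL2 p \<Longrightarrow> y \<in> PGL2 p \<Longrightarrow> pmul p x (pmul p (pinv p x) y) = y"
  by (simp add: pm_assoc[symmetric] pi_closed pm_inv_r pm_one_l)

lemma pm_cancel2: "x \<in> PGL2 p \<Longrightarrow> y \<in> PGL2 p \<Longrightarrow> pmul p (pinv p x) (pmul p x y) = y"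
  by (simp add: pm_assoc[symmetric] pi_closed pm_inv_l pm_one_l)

lemma pi_mult: "x \<in> PGL2 p \<Longrightarrow> y \<in> PGL2 p \<Longrightarrow> pinv p (pmul p x y) = pmul p (pinv p y) (pinv p x)"
  using Gp.inv_mult_group inv_PG[OF pr] Gp.m_closed by fastforce

lemma pi_pi: "x \<in> PGL2 p \<Longrightarrow> pinv p (pinv p x) = x"
  using Gp.inv_inv inv_PG[OF pr] pi_closed by fastforce

lemma pi_one: "pinv p (pone p) = pone p"
  using Gp.inv_one inv_PG[OF pr] pone_closed by fastforce

lemma pm_cancel_left: "x \<in> PGL2 p \<Longrightarrow> y \<in> PGL2 p \<Longrightarrow> z \<in> PGL2 p \<Longrightarrow> pmul p x y = pmul p x z \<Longrightarrow> y = z"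
  using Gp.l_cancel by simp

lemma pm_idem_one: "x \<in> PGL2 p \<Longrightarrow> pmul p x x = x \<Longrightarrow> x = pone p"
  using pm_cancel_left[of x x "pone p"] pm_one_r pone_closed by simp

lemma pm_inv_unique: "x \<in> PGL2 p \<Longrightarrow> y \<in> PGL2 p \<Longrightarrow> pmul p x y = pone p \<Longrightarrow> y = pinv p x"
  using pm_cancel_left[of x y "pinv p x"] pm_inv_r pi_closed by simp

lemma PSL2_m: "x \<in> PSL2 p \<Longrightarrow> y \<in> PSL2 p \<Longrightarrow> pmul p x y \<in> PSL2 p"
  using subgroup.m_closed[OF subgroup_PSL2[OF pr]] by simp

lemma PSL2_i: "x \<in> PSL2 p \<Longrightarrow> pinv p x \<in> PSL2 p"
  using subgroup.m_inv_closed[OF subgroup_PSL2[OF pr]] inv_PG[OF pr] PSL2_sub by fastforce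

lemma PSL2_one: "pone p \<in> PSL2 p"
  using subgroup.one_closed[OF subgroup_PSL2[OF pr]] by simp

lemma PSL2_PGL2: "x \<in> PSL2 p \<Longrightarrow> x \<in> PGL2 p" using PSL2_sub by blast

lemma PSL2_cancel_r: "x \<in> PSL2 p \<Longrightarrow> y \<in> PGL2 p \<Longrightarrow> pmul p x y \<in> PSL2 p \<Longrightarrow> y \<in> PSL2 p"
proof -
  assume x: "x \<in> PSL2 p" and y: "y \<in> PGL2 p" and xy: "pmul p x y \<in> PSL2 p"
  have "pmul p (pinv p x) (pmul p x y) \<in> PSL2 p" using PSL2_m[OF PSL2_i[OF x] xy] .
  thus ?thesis using pm_cancel2 PSL2_PGL2[OF x] y by simp
qed

lemma PSL2_cancel_l: "y \<in> PSL2 p \<Longrightarrow> x \<in> PGL2 p \<Longrightarrow> pmul p x y \<in> PSL2 p \<Longrightarrow> x \<in> PSL2 p"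
proof -
  assume y: "y \<in> PSL2 p" and x: "x \<in> PGL2 p" and xy: "pmul p x y \<in> PSL2 p"
  have "pmul p (pmul p x y) (pinv p y) \<in> PSL2 p" using PSL2_m[OF xy PSL2_i[OF y]] .
  thus ?thesis using pm_assoc pm_inv_r pm_one_r x PSL2_PGL2[OF y] pi_closed by simp
qed

end


lemma quad_gal:
  assumes a: "a \<notin> \<rat>" "a * a \<in> \<rat>" "K = {of_rat x + of_rat y * a | x y. True}"
  shows "a \<in> K" "a \<noteq> - a"
    "\<sigma> \<in> GQ \<Longrightarrow> \<sigma> a = a \<or> \<sigma> a = - a"
    "\<sigma> \<in> GQ \<Longrightarrow> \<sigma> \<in> Gal K \<longleftrightarrow> \<sigma> a = a"
proof -
  show aK: "a \<in> K" unfolding a(3) by (rule CollectI, rule exI[of _ 0], rule exI[of _ 1]) simp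
  show "a \<noteq> - a"
  proof
    assume "a = - a" hence "a = 0" by simp
    thus False using a(1) by simp
  qed
  obtain r where r: "a * a = of_rat r" using a(2) by (auto elim: Rats_cases)
  assume s: "\<sigma> \<in> GQ"
  have "\<sigma> a * \<sigma> a = a * a" using GQ_mult[OF s, of a a] r GQ_of_rat[OF s] by simp
  hence "(\<sigma> a - a) * (\<sigma> a + a) = 0" by (simp add: algebra_simps)
  hence "\<sigma> a - a = 0 \<or> \<sigma> a + a = 0" by simp
  thus "\<sigma> a = a \<or> \<sigma> a = - a" by (auto simp: eq_neg_iff_add_eq_0)
next
  assume s: "\<sigma> \<in> GQ"
  show "\<sigma> \<in> Gal K \<longleftrightarrow> \<sigma> a = a"
  proof
    assume "\<sigma> \<in> Gal K" thus "\<sigma> a = a" using a(3) unfolding Gal_def by (force intro: exI[of _ 0] exI[of _ 1])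
  next
    assume sa: "\<sigma> a = a"
    have "\<forall>x\<in>K. \<sigma> x = x" unfolding a(3) using sa by (auto simp: GQ_add[OF s] GQ_mult[OF s] GQ_of_rat[OF s])
    thus "\<sigma> \<in> Gal K" using s unfolding Gal_def by blast
  qed
qed

context
  fixes p :: nat and v :: int
  assumes pr: "prime p" and vr: "v \<in> {1..<int p}"
begin

lemma V_PGL2: "Vmat p v \<in> PGL2 p"
  unfolding Vmat_V0 by (rule pcl_PGL2[OF V0_GL2[OF pr vr]])

lemma V_inv: "pinv p (Vmat p v) = Vmat p v"
  using pm_inv_unique[OF pr V_PGL2 V_PGL2 Vmat_sq[OF pr vr]] by simp

lemma V_V: "pmul p (Vmat p v) (Vmat p v) = pone p" using Vmat_sq[OF pr vr] .

lemma V_V2: "y \<in> PGL2 p \<Longrightarrow> pmul p (Vmat p v) (pmul p (Vmat p v) y) = y"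
  by (simp add: pm_assoc[OF pr, symmetric] V_PGL2 V_V pm_one_l[OF pr])

lemma gact_in: "\<sigma> \<in> Gal (Qp p) \<Longrightarrow> x \<in> PGL2 p \<Longrightarrow> gact p v \<sigma> x = x"
  unfolding gact_def eta_def by (simp add: pi_one[OF pr] pm_one_l[OF pr] pm_one_r[OF pr] pone_closed[OF pr] pm_closed[OF pr])

lemma gact_out: "\<sigma> \<notin> Gal (Qp p) \<Longrightarrow> gact p v \<sigma> x = pmul p (pmul p (Vmat p v) x) (Vmat p v)"
  unfolding gact_def eta_def by (simp add: V_inv)

end

lemma J_PGL2: "prime p \<Longrightarrow> Jm p \<in> PGL2 p" using Jm_PSL2 PSL2_sub by blast


theorem proposition4:
  fixes p :: nat and v :: int and F :: "qbar set" and c :: "qbar \<Rightarrow> qbar"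
    and \<rho> :: "(qbar \<Rightarrow> qbar) \<Rightarrow> m2 set"
  assumes "prime p" and "p \<ge> 7"
    and "v \<in> {1..<int p}" and "\<not> QuadRes (int p) v"
    and "number_field F" and "Qp p \<subseteq> F"
    and "c \<in> GQ" and "\<exists>x\<in>Qp p. c x \<noteq> x"
    and "\<forall>\<sigma>\<in>Gal F. \<rho> \<sigma> \<in> PGL2 p"
    and "\<forall>\<sigma>\<in>Gal F. \<forall>\<tau>\<in>Gal F. \<rho> (\<sigma> \<circ> \<tau>) = pmul p (\<rho> \<sigma>) (\<rho> \<tau>)"
    and "krull_continuous (Gal F) \<rho>"
    and "\<forall>\<sigma>\<in>Gal F. QuadRes (int p) (mdet p (rep (\<rho> \<sigma>))) \<longleftrightarrow> QuadRes (int p) (cyc_char p \<sigma>)"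
  shows "defined_over_Q p v F \<rho> \<longleftrightarrow>
    (\<exists>g \<in> PGL2 p - PSL2 p. \<exists>r :: (qbar \<Rightarrow> qbar) \<Rightarrow> m2 set.
        (\<forall>\<sigma>\<in>Gal (Qp p). r \<sigma> \<in> PSL2 p) \<and>
        (\<forall>\<sigma>\<in>Gal (Qp p). \<forall>\<tau>\<in>Gal (Qp p). r (\<sigma> \<circ> \<tau>) = pmul p (r \<sigma>) (r \<tau>)) \<and>
        (\<forall>\<sigma>\<in>Gal F. r \<sigma> = \<rho> \<sigma>) \<and>
        r (c \<circ> c) = pmul p g g \<and>
        (\<forall>\<sigma>\<in>Gal (Qp p). r (inv_into UNIV c \<circ> \<sigma> \<circ> c) = pmul p (pinv p g) (pmul p (r \<sigma>) g)))"
proof -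
  have pr: "prime p" using assms(1) .
  have p2: "2 < p" using assms(2) by simp
  have vr: "v \<in> {1..<int p}" using assms(3) .
  have vn: "\<not> QuadRes (int p) v" using assms(4) .
  have cG: "c \<in> GQ" using assms(7) .
  obtain a where a: "a \<notin> \<rat>" "a * a \<in> \<rat>" "Qp p = {of_rat x + of_rat y * a | x y. True}"
    using Qp_spec[OF pr p2 vr vn] by blast
  note QG = quad_gal[OF a]
  have galQ: "\<And>\<sigma>. \<sigma> \<in> GQ \<Longrightarrow> \<sigma> \<in> Gal (Qp p) \<longleftrightarrow> \<sigma> a = a" using QG(4) by blast
  have sgn: "\<And>\<sigma>. \<sigma> \<in> GQ \<Longrightarrow> \<sigma> a = a \<or> \<sigma> a = - a" using QG(3) by blast
  have anz: "a \<noteq> - a" using QG(2) .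
  have out_a: "\<And>\<sigma>. \<sigma> \<in> GQ \<Longrightarrow> \<sigma> \<notin> Gal (Qp p) \<Longrightarrow> \<sigma> a = - a" using galQ sgn by blast
  have cnot: "c \<notin> Gal (Qp p)" using assms(8) unfolding Gal_def by auto
  have ca: "c a = - a" using out_a[OF cG cnot] .
  define ci where "ci = inv_into UNIV c"
  have ciG: "ci \<in> GQ" unfolding ci_def using GQ_inv[OF cG] .
  have c_ci: "\<And>x. c (ci x) = x" unfolding ci_def using GQ_inv_right[OF cG] .
  have ci_c: "\<And>x. ci (c x) = x" unfolding ci_def using GQ_inv_left[OF cG] .
  have cia: "ci (- a) = a" using ci_c[of a] ca by simp
  have GQp: "Gal (Qp p) \<subseteq> GQ" by (rule Gal_sub)
  have FQ: "Gal F \<subseteq> Gal (Qp p)" by (rule Gal_mono[OF assms(6)])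
  have ci_out: "\<And>\<sigma>. \<sigma> \<in> GQ \<Longrightarrow> \<sigma> \<notin> Gal (Qp p) \<Longrightarrow> ci \<circ> \<sigma> \<in> Gal (Qp p)"
  proof -
    fix \<sigma> assume s: "\<sigma> \<in> GQ" "\<sigma> \<notin> Gal (Qp p)"
    have "(ci \<circ> \<sigma>) a = a" using out_a[OF s] cia by simp
    thus "ci \<circ> \<sigma> \<in> Gal (Qp p)" using galQ GQ_comp[OF ciG s(1)] by blast
  qed
  have cc_in: "c \<circ> c \<in> Gal (Qp p)"
  proof -
    have "(c \<circ> c) a = a" using ca GQ_uminus[OF cG, of a] by simp
    thus ?thesis using galQ GQ_comp[OF cG cG] by blast
  qed
  have conj_in: "\<And>s. s \<in> Gal (Qp p) \<Longrightarrow> ci \<circ> s \<circ> c \<in> Gal (Qp p)"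
  proof -
    fix s assume s: "s \<in> Gal (Qp p)"
    have sG: "s \<in> GQ" using s GQp by blast
    have "s a = a" using galQ sG s by blast
    hence "(ci \<circ> s \<circ> c) a = a" using ca GQ_uminus[OF sG, of a] cia by simp
    thus "ci \<circ> s \<circ> c \<in> Gal (Qp p)" using galQ GQ_comp[OF GQ_comp[OF ciG sG] cG] by blast
  qed
  have JP: "Jm p \<in> PSL2 p" using Jm_PSL2[OF pr] .
  have JG: "Jm p \<in> PGL2 p" using J_PGL2[OF pr] .
  have VG: "Vmat p v \<in> PGL2 p" using V_PGL2[OF pr vr] .
  have VnP: "Vmat p v \<notin> PSL2 p" using Vmat_nonPSL[OF pr vr vn] by blast
  note ALG = pm_assoc[OF pr] pm_cancel1[OF pr] pm_cancel2[OF pr] pm_inv_r[OF pr] pm_inv_l[OF pr]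
    pm_one_l[OF pr] pm_one_r[OF pr] pi_mult[OF pr] pi_pi[OF pr] pi_one[OF pr] pm_closed[OF pr]
    pi_closed[OF pr] pone_closed[OF pr] V_inv[OF pr vr] V_V[OF pr vr] V_V2[OF pr vr] VG JG
  define phi where "phi x = pmul p (pmul p (Jm p) x) (pinv p (Jm p))" for x
  have phiG: "\<And>x. x \<in> PGL2 p \<Longrightarrow> phi x \<in> PGL2 p" unfolding phi_def by (simp add: ALG)
  have phiP: "\<And>x. x \<in> PSL2 p \<Longrightarrow> phi x \<in> PSL2 p"
    unfolding phi_def using JP by (intro PSL2_m[OF pr] PSL2_i[OF pr]) auto
  have phiP_rev: "\<And>x. x \<in> PGL2 p \<Longrightarrow> phi x \<in> PSL2 p \<Longrightarrow> x \<in> PSL2 p"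
  proof -
    fix x assume x: "x \<in> PGL2 p" "phi x \<in> PSL2 p"
    have "x = pmul p (pinv p (Jm p)) (pmul p (phi x) (Jm p))" unfolding phi_def using x by (simp add: ALG)
    moreover have "pmul p (pinv p (Jm p)) (pmul p (phi x) (Jm p)) \<in> PSL2 p"
      using JP x(2) by (intro PSL2_m[OF pr] PSL2_i[OF pr]) auto
    ultimately show "x \<in> PSL2 p" by simp
  qed
  have rhoG: "\<And>\<sigma>. \<sigma> \<in> Gal F \<Longrightarrow> \<rho> \<sigma> \<in> PGL2 p" using assms(9) by blast
  have rho_hom: "\<And>\<sigma> \<tau>. \<sigma> \<in> Gal F \<Longrightarrow> \<tau> \<in> Gal F \<Longrightarrow> \<rho> (\<sigma> \<circ> \<tau>) = pmul p (\<rho> \<sigma>) (\<rho> \<tau>)"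
    using assms(10) by blast
  have rho_id: "\<rho> id = pone p"
  proof -
    have "\<rho> (id \<circ> id) = pmul p (\<rho> id) (\<rho> id)" using rho_hom Gal_id by blast
    thus ?thesis using pm_idem_one[OF pr rhoG[OF Gal_id]] by simp
  qed
  have rho_inv: "\<And>\<sigma>. \<sigma> \<in> Gal F \<Longrightarrow> \<rho> (inv_into UNIV \<sigma>) = pinv p (\<rho> \<sigma>)"
  proof -
    fix \<sigma> assume s: "\<sigma> \<in> Gal F"
    have sG: "\<sigma> \<in> GQ" using s Gal_sub by blast
    have "pmul p (\<rho> \<sigma>) (\<rho> (inv_into UNIV \<sigma>)) = \<rho> (\<sigma> \<circ> inv_into UNIV \<sigma>)"
      using rho_hom[OF s Gal_inv[OF s]] by simp
    also have "\<dots> = pone p" using GQ_comp_inv[OF sG] rho_id by simp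
    finally show "\<rho> (inv_into UNIV \<sigma>) = pinv p (\<rho> \<sigma>)"
      by (rule pm_inv_unique[OF pr rhoG[OF s] rhoG[OF Gal_inv[OF s]]])
  qed
  have xi_F: "\<And>\<sigma>. \<sigma> \<in> Gal F \<Longrightarrow> xi p v \<rho> \<sigma> = phi (\<rho> \<sigma>)"
  proof -
    fix \<sigma> assume s: "\<sigma> \<in> Gal F"
    have sQ: "\<sigma> \<in> Gal (Qp p)" using s FQ by blast
    have "xi p v \<rho> \<sigma> = pmul p (ptrans p (pinv p (\<rho> \<sigma>))) (pone p)"
      unfolding xi_def rho_dual_def eta_def using sQ rho_inv[OF s] by simp
    also have "ptrans p (pinv p (\<rho> \<sigma>)) = phi (\<rho> \<sigma>)"
      unfolding phi_def by (rule ptrans_pinv[OF pr rhoG[OF s]])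
    finally show "xi p v \<rho> \<sigma> = phi (\<rho> \<sigma>)" using phiG[OF rhoG[OF s]] by (simp add: ALG)
  qed
  show ?thesis
  proof
    assume "defined_over_Q p v F \<rho>"
    then obtain z where zc: "cocycle p v GQ z" and coh: "cohomologous p v (Gal F) z (xi p v \<rho>)"
      unfolding defined_over_Q_def by blast
    obtain b where b: "b \<in> PSL2 p"
      and bx: "\<forall>\<sigma>\<in>Gal F. xi p v \<rho> \<sigma> = pmul p (pmul p (pinv p b) (z \<sigma>)) (gact p v \<sigma> b)"
      using coh unfolding cohomologous_def by blast
    have zP: "\<And>\<sigma>. \<sigma> \<in> GQ \<Longrightarrow> z \<sigma> \<in> PSL2 p" using zc unfolding cocycle_def by blast
    have zG: "\<And>\<sigma>. \<sigma> \<in> GQ \<Longrightarrow> z \<sigma> \<in> PGL2 p" using zP PSL2_sub by blast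
    have zco: "\<And>\<sigma> \<tau>. \<sigma> \<in> GQ \<Longrightarrow> \<tau> \<in> GQ \<Longrightarrow> z (\<sigma> \<circ> \<tau>) = pmul p (z \<sigma>) (gact p v \<sigma> (z \<tau>))"
      using zc unfolding cocycle_def by blast
    have bG: "b \<in> PGL2 p" using b PSL2_sub by blast
    have zcG: "z c \<in> PGL2 p" using zG[OF cG] .
    define r where "r \<sigma> = pmul p (pinv p (Jm p)) (pmul p (pinv p b) (pmul p (z \<sigma>) (pmul p b (Jm p))))" for \<sigma>
    define g where "g = pmul p (pinv p (Jm p)) (pmul p (pinv p b) (pmul p (z c) (pmul p (Vmat p v) (pmul p b (Jm p)))))"
    have gG: "g \<in> PGL2 p" unfolding g_def using zcG bG by (simp add: ALG)
    have gnP: "g \<notin> PSL2 p"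
    proof
      assume gP: "g \<in> PSL2 p"
      let ?x1 = "pmul p (pinv p (Jm p)) (pmul p (pinv p b) (z c))"
      have x1: "?x1 \<in> PSL2 p" using JP b zP[OF cG] by (intro PSL2_m[OF pr] PSL2_i[OF pr]) auto
      have "g = pmul p ?x1 (pmul p (Vmat p v) (pmul p b (Jm p)))" unfolding g_def using zcG bG by (simp add: ALG)
      hence "pmul p (Vmat p v) (pmul p b (Jm p)) \<in> PSL2 p"
        using PSL2_cancel_r[OF pr x1] gP zcG bG by (simp add: ALG)
      hence "Vmat p v \<in> PSL2 p" using PSL2_cancel_l[OF pr PSL2_m[OF pr b JP] VG] by simp
      thus False using VnP by simp
    qed
    show "\<exists>g \<in> PGL2 p - PSL2 p. \<exists>r :: (qbar \<Rightarrow> qbar) \<Rightarrow> m2 set.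
        (\<forall>\<sigma>\<in>Gal (Qp p). r \<sigma> \<in> PSL2 p) \<and>
        (\<forall>\<sigma>\<in>Gal (Qp p). \<forall>\<tau>\<in>Gal (Qp p). r (\<sigma> \<circ> \<tau>) = pmul p (r \<sigma>) (r \<tau>)) \<and>
        (\<forall>\<sigma>\<in>Gal F. r \<sigma> = \<rho> \<sigma>) \<and>
        r (c \<circ> c) = pmul p g g \<and>
        (\<forall>\<sigma>\<in>Gal (Qp p). r (inv_into UNIV c \<circ> \<sigma> \<circ> c) = pmul p (pinv p g) (pmul p (r \<sigma>) g))"
    proof (intro bexI[of _ g] exI[of _ r] conjI ballI)
      show "g \<in> PGL2 p - PSL2 p" using gG gnP by simp
    next
      fix \<sigma> assume s: "\<sigma> \<in> Gal (Qp p)"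
      hence sG: "\<sigma> \<in> GQ" using GQp by blast
      show "r \<sigma> \<in> PSL2 p" unfolding r_def using JP b zP[OF sG]
        by (intro PSL2_m[OF pr] PSL2_i[OF pr]) auto
    next
      fix \<sigma> \<tau> assume s: "\<sigma> \<in> Gal (Qp p)" and t: "\<tau> \<in> Gal (Qp p)"
      hence sG: "\<sigma> \<in> GQ" and tG: "\<tau> \<in> GQ" using GQp by blast+
      have "z (\<sigma> \<circ> \<tau>) = pmul p (z \<sigma>) (z \<tau>)" using zco[OF sG tG] gact_in[OF pr vr s zG[OF tG]] by simp
      thus "r (\<sigma> \<circ> \<tau>) = pmul p (r \<sigma>) (r \<tau>)" unfolding r_def using zG[OF sG] zG[OF tG] bG by (simp add: ALG)
    next
      fix \<sigma> assume s: "\<sigma> \<in> Gal F"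
      hence sQ: "\<sigma> \<in> Gal (Qp p)" and sG: "\<sigma> \<in> GQ" using FQ GQp by blast+
      have e: "phi (\<rho> \<sigma>) = pmul p (pmul p (pinv p b) (z \<sigma>)) b"
        using bx s xi_F[OF s] gact_in[OF pr vr sQ bG] by simp
      have "r \<sigma> = pmul p (pinv p (Jm p)) (pmul p (phi (\<rho> \<sigma>)) (Jm p))"
        unfolding r_def e using zG[OF sG] bG by (simp add: ALG)
      also have "\<dots> = \<rho> \<sigma>" unfolding phi_def using rhoG[OF s] by (simp add: ALG)
      finally show "r \<sigma> = \<rho> \<sigma>" .
    next
      have "z (c \<circ> c) = pmul p (z c) (pmul p (pmul p (Vmat p v) (z c)) (Vmat p v))"
        using zco[OF cG cG] gact_out[OF pr vr cnot] by simp
      thus "r (c \<circ> c) = pmul p g g" unfolding r_def g_def using zcG bG by (simp add: ALG)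
    next
      fix \<sigma> assume s: "\<sigma> \<in> Gal (Qp p)"
      hence sG: "\<sigma> \<in> GQ" using GQp by blast
      let ?t = "inv_into UNIV c \<circ> \<sigma> \<circ> c"
      have tG: "?t \<in> GQ" using GQ_comp[OF GQ_comp[OF GQ_inv[OF cG] sG] cG] .
      have ct: "c \<circ> ?t = \<sigma> \<circ> c" by (rule ext) (simp add: c_ci[unfolded ci_def])
      have e1: "z (\<sigma> \<circ> c) = pmul p (z \<sigma>) (z c)" using zco[OF sG cG] gact_in[OF pr vr s zcG] by simp
      have e2: "z (c \<circ> ?t) = pmul p (z c) (pmul p (pmul p (Vmat p v) (z ?t)) (Vmat p v))"
        using zco[OF cG tG] gact_out[OF pr vr cnot] by simp
      have e3: "pmul p (z c) (pmul p (Vmat p v) (pmul p (z ?t) (Vmat p v))) = pmul p (z \<sigma>) (z c)"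
        using e1 e2 ct zcG zG[OF tG] by (simp add: ALG)
      have "z ?t = pmul p (Vmat p v) (pmul p (pinv p (z c)) (pmul p (pmul p (z c) (pmul p (Vmat p v) (pmul p (z ?t) (Vmat p v)))) (Vmat p v)))"
        using zcG zG[OF tG] by (simp add: ALG)
      also have "\<dots> = pmul p (Vmat p v) (pmul p (pinv p (z c)) (pmul p (pmul p (z \<sigma>) (z c)) (Vmat p v)))"
        unfolding e3 ..
      finally have zt: "z ?t = pmul p (Vmat p v) (pmul p (pinv p (z c)) (pmul p (pmul p (z \<sigma>) (z c)) (Vmat p v)))" .
      show "r ?t = pmul p (pinv p g) (pmul p (r \<sigma>) g)"
        unfolding r_def g_def zt using zcG zG[OF sG] bG by (simp add: ALG)
    qed
  next
    assume "\<exists>g \<in> PGL2 p - PSL2 p. \<exists>r :: (qbar \<Rightarrow> qbar) \<Rightarrow> m2 set.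
        (\<forall>\<sigma>\<in>Gal (Qp p). r \<sigma> \<in> PSL2 p) \<and>
        (\<forall>\<sigma>\<in>Gal (Qp p). \<forall>\<tau>\<in>Gal (Qp p). r (\<sigma> \<circ> \<tau>) = pmul p (r \<sigma>) (r \<tau>)) \<and>
        (\<forall>\<sigma>\<in>Gal F. r \<sigma> = \<rho> \<sigma>) \<and>
        r (c \<circ> c) = pmul p g g \<and>
        (\<forall>\<sigma>\<in>Gal (Qp p). r (inv_into UNIV c \<circ> \<sigma> \<circ> c) = pmul p (pinv p g) (pmul p (r \<sigma>) g))"
    then obtain g r where gG: "g \<in> PGL2 p" and gnP: "g \<notin> PSL2 p"
      and rP: "\<forall>\<sigma>\<in>Gal (Qp p). r \<sigma> \<in> PSL2 p"
      and rhom: "\<forall>\<sigma>\<in>Gal (Qp p). \<forall>\<tau>\<in>Gal (Qp p). r (\<sigma> \<circ> \<tau>) = pmul p (r \<sigma>) (r \<tau>)"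
      and rF: "\<forall>\<sigma>\<in>Gal F. r \<sigma> = \<rho> \<sigma>" and rcc: "r (c \<circ> c) = pmul p g g"
      and rconj: "\<forall>\<sigma>\<in>Gal (Qp p). r (ci \<circ> \<sigma> \<circ> c) = pmul p (pinv p g) (pmul p (r \<sigma>) g)"
      unfolding ci_def by blast
    have rG: "\<And>\<sigma>. \<sigma> \<in> Gal (Qp p) \<Longrightarrow> r \<sigma> \<in> PGL2 p" using rP PSL2_sub by blast
    define h where "h = phi g"
    have hG: "h \<in> PGL2 p" unfolding h_def using phiG[OF gG] .
    have hnP: "h \<notin> PSL2 p" unfolding h_def using phiP_rev[OF gG] gnP by blast
    define z where "z \<sigma> = (if \<sigma> \<in> Gal (Qp p) then phi (r \<sigma>)
        else pmul p h (pmul p (phi (r (ci \<circ> \<sigma>))) (Vmat p v)))" for \<sigma>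
    have z_in: "\<And>\<sigma>. \<sigma> \<in> Gal (Qp p) \<Longrightarrow> z \<sigma> = phi (r \<sigma>)" unfolding z_def by simp
    have z_out: "\<And>\<sigma>. \<sigma> \<notin> Gal (Qp p) \<Longrightarrow> z \<sigma> = pmul p h (pmul p (phi (r (ci \<circ> \<sigma>))) (Vmat p v))"
      unfolding z_def by simp
    have zP: "\<And>\<sigma>. \<sigma> \<in> GQ \<Longrightarrow> z \<sigma> \<in> PSL2 p"
    proof -
      fix \<sigma> assume sG: "\<sigma> \<in> GQ"
      show "z \<sigma> \<in> PSL2 p"
      proof (cases "\<sigma> \<in> Gal (Qp p)")
        case True thus ?thesis using z_in phiP rP by simp
      next
        case False
        have cs: "ci \<circ> \<sigma> \<in> Gal (Qp p)" using ci_out[OF sG False] .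
        have y1: "phi (r (ci \<circ> \<sigma>)) \<in> PSL2 p" using phiP rP cs by blast
        have y2: "pmul p (phi (r (ci \<circ> \<sigma>))) (Vmat p v) \<notin> PSL2 p"
        proof
          assume "pmul p (phi (r (ci \<circ> \<sigma>))) (Vmat p v) \<in> PSL2 p"
          hence "Vmat p v \<in> PSL2 p" using PSL2_cancel_r[OF pr y1 VG] by simp
          thus False using VnP by simp
        qed
        have y3: "pmul p (phi (r (ci \<circ> \<sigma>))) (Vmat p v) \<in> PGL2 p"
          using PSL2_sub y1 VG pm_closed[OF pr] by blast
        show ?thesis unfolding z_out[OF False] using nonPSL2_mult[OF pr p2] hG hnP y2 y3 by blast
      qed
    qed
    have zG: "\<And>\<sigma>. \<sigma> \<in> GQ \<Longrightarrow> z \<sigma> \<in> PGL2 p" using zP PSL2_sub by blast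
    obtain S1 where S1: "finite S1" "\<And>\<mu>. \<mu> \<in> GQ \<Longrightarrow> \<forall>s\<in>S1. \<mu> s = s \<Longrightarrow> \<mu> \<in> Gal F"
      using number_field_fix[OF assms(5)] by blast
    obtain S0 where S0: "finite S0" "\<forall>\<tau>\<in>Gal F. (\<forall>x\<in>S0. \<tau> x = id x) \<longrightarrow> \<rho> \<tau> = \<rho> id"
      using assms(11) Gal_id unfolding krull_continuous_def by blast
    have rcont: "\<And>\<sigma>. \<sigma> \<in> Gal (Qp p) \<Longrightarrow> \<exists>S. finite S \<and> (\<forall>\<tau>\<in>Gal (Qp p). (\<forall>x\<in>S. \<tau> x = \<sigma> x) \<longrightarrow> r \<tau> = r \<sigma>)"
    proof -
      fix \<sigma> assume s: "\<sigma> \<in> Gal (Qp p)"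
      have sG: "\<sigma> \<in> GQ" using s GQp by blast
      have "\<forall>\<tau>\<in>Gal (Qp p). (\<forall>x\<in>S1 \<union> S0. \<tau> x = \<sigma> x) \<longrightarrow> r \<tau> = r \<sigma>"
      proof (intro ballI impI)
        fix \<tau> assume t: "\<tau> \<in> Gal (Qp p)" and ag: "\<forall>x\<in>S1 \<union> S0. \<tau> x = \<sigma> x"
        have tG: "\<tau> \<in> GQ" using t GQp by blast
        define \<mu> where "\<mu> = inv_into UNIV \<sigma> \<circ> \<tau>"
        have muG: "\<mu> \<in> GQ" unfolding \<mu>_def using GQ_comp[OF GQ_inv[OF sG] tG] .
        have mufix: "\<forall>x\<in>S1 \<union> S0. \<mu> x = x" unfolding \<mu>_def using ag GQ_inv_left[OF sG] by simp
        have muF: "\<mu> \<in> Gal F" using S1(2)[OF muG] mufix by blast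
        have rmu: "r \<mu> = pone p" using rF muF S0(2) mufix rho_id by simp
        have tau_eq: "\<tau> = \<sigma> \<circ> \<mu>" unfolding \<mu>_def by (rule ext) (simp add: GQ_inv_right[OF sG])
        have "r \<tau> = pmul p (r \<sigma>) (r \<mu>)" using rhom s FQ muF tau_eq by auto
        thus "r \<tau> = r \<sigma>" using rmu rG[OF s] by (simp add: ALG)
      qed
      thus "\<exists>S. finite S \<and> (\<forall>\<tau>\<in>Gal (Qp p). (\<forall>x\<in>S. \<tau> x = \<sigma> x) \<longrightarrow> r \<tau> = r \<sigma>)"
        using S1(1) S0(1) by blast
    qed
    have zcont: "krull_continuous GQ z"
      unfolding krull_continuous_def
    proof
      fix \<sigma> assume sG: "\<sigma> \<in> GQ"
      show "\<exists>S. finite S \<and> (\<forall>\<tau>\<in>GQ. (\<forall>x\<in>S. \<tau> x = \<sigma> x) \<longrightarrow> z \<tau> = z \<sigma>)"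
      proof (cases "\<sigma> \<in> Gal (Qp p)")
        case True
        obtain S where S: "finite S" "\<forall>\<tau>\<in>Gal (Qp p). (\<forall>x\<in>S. \<tau> x = \<sigma> x) \<longrightarrow> r \<tau> = r \<sigma>"
          using rcont[OF True] by blast
        have "\<forall>\<tau>\<in>GQ. (\<forall>x\<in>insert a S. \<tau> x = \<sigma> x) \<longrightarrow> z \<tau> = z \<sigma>"
        proof (intro ballI impI)
          fix \<tau> assume tG: "\<tau> \<in> GQ" and ag: "\<forall>x\<in>insert a S. \<tau> x = \<sigma> x"
          have "\<tau> a = a" using ag galQ[OF sG] True by simp
          hence t: "\<tau> \<in> Gal (Qp p)" using galQ[OF tG] by simp
          have "\<forall>x\<in>S. \<tau> x = \<sigma> x" using ag by blast
          hence "r \<tau> = r \<sigma>" using S(2) t by blast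
          thus "z \<tau> = z \<sigma>" using z_in[OF t] z_in[OF True] by simp
        qed
        thus ?thesis using S(1) by blast
      next
        case False
        have cs: "ci \<circ> \<sigma> \<in> Gal (Qp p)" using ci_out[OF sG False] .
        obtain S where S: "finite S" "\<forall>\<tau>\<in>Gal (Qp p). (\<forall>x\<in>S. \<tau> x = (ci \<circ> \<sigma>) x) \<longrightarrow> r \<tau> = r (ci \<circ> \<sigma>)"
          using rcont[OF cs] by blast
        have "\<forall>\<tau>\<in>GQ. (\<forall>x\<in>insert a S. \<tau> x = \<sigma> x) \<longrightarrow> z \<tau> = z \<sigma>"
        proof (intro ballI impI)
          fix \<tau> assume tG: "\<tau> \<in> GQ" and ag: "\<forall>x\<in>insert a S. \<tau> x = \<sigma> x"
          have "\<tau> a = - a" using ag out_a[OF sG False] by simp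
          hence t: "\<tau> \<notin> Gal (Qp p)" using galQ[OF tG] anz by simp
          have ct: "ci \<circ> \<tau> \<in> Gal (Qp p)" using ci_out[OF tG t] .
          have "\<forall>x\<in>S. (ci \<circ> \<tau>) x = (ci \<circ> \<sigma>) x" using ag by simp
          hence "r (ci \<circ> \<tau>) = r (ci \<circ> \<sigma>)" using S(2) ct by blast
          thus "z \<tau> = z \<sigma>" using z_out[OF t] z_out[OF False] by simp
        qed
        thus ?thesis using S(1) by blast
      qed
    qed
    have zco: "\<And>\<sigma> \<tau>. \<sigma> \<in> GQ \<Longrightarrow> \<tau> \<in> GQ \<Longrightarrow> z (\<sigma> \<circ> \<tau>) = pmul p (z \<sigma>) (gact p v \<sigma> (z \<tau>))"
    proof -
      fix \<sigma> \<tau> assume sG: "\<sigma> \<in> GQ" and tG: "\<tau> \<in> GQ"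
      have stG: "\<sigma> \<circ> \<tau> \<in> GQ" using GQ_comp[OF sG tG] .
      show "z (\<sigma> \<circ> \<tau>) = pmul p (z \<sigma>) (gact p v \<sigma> (z \<tau>))"
      proof (cases "\<sigma> \<in> Gal (Qp p)"; cases "\<tau> \<in> Gal (Qp p)")
        assume s: "\<sigma> \<in> Gal (Qp p)" and t: "\<tau> \<in> Gal (Qp p)"
        have st: "\<sigma> \<circ> \<tau> \<in> Gal (Qp p)" using Gal_comp[OF s t] .
        show ?thesis unfolding z_in[OF st] z_in[OF s] z_in[OF t] gact_in[OF pr vr s phiG[OF rG[OF t]]]
          using rhom s t rG[OF s] rG[OF t] unfolding phi_def by (simp add: ALG)
      next
        assume s: "\<sigma> \<in> Gal (Qp p)" and t: "\<tau> \<notin> Gal (Qp p)"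
        have "(\<sigma> \<circ> \<tau>) a = - a" using out_a[OF tG t] galQ[OF sG] s GQ_uminus[OF sG] by simp
        hence st: "\<sigma> \<circ> \<tau> \<notin> Gal (Qp p)" using galQ[OF stG] anz by simp
        have ct: "ci \<circ> \<tau> \<in> Gal (Qp p)" using ci_out[OF tG t] .
        have fe: "ci \<circ> (\<sigma> \<circ> \<tau>) = (ci \<circ> \<sigma> \<circ> c) \<circ> (ci \<circ> \<tau>)" by (rule ext) (simp add: c_ci)
        have rr: "r (ci \<circ> (\<sigma> \<circ> \<tau>)) = pmul p (pmul p (pinv p g) (pmul p (r \<sigma>) g)) (r (ci \<circ> \<tau>))"
          unfolding fe using rhom conj_in[OF s] ct rconj s by simp
        show ?thesis unfolding z_out[OF st] z_in[OF s] z_out[OF t] rr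
          using rG[OF s] rG[OF ct] gG unfolding h_def phi_def by (simp add: ALG gact_in[OF pr vr s])
      next
        assume s: "\<sigma> \<notin> Gal (Qp p)" and t: "\<tau> \<in> Gal (Qp p)"
        have "(\<sigma> \<circ> \<tau>) a = - a" using out_a[OF sG s] galQ[OF tG] t by simp
        hence st: "\<sigma> \<circ> \<tau> \<notin> Gal (Qp p)" using galQ[OF stG] anz by simp
        have cs: "ci \<circ> \<sigma> \<in> Gal (Qp p)" using ci_out[OF sG s] .
        have fe: "ci \<circ> (\<sigma> \<circ> \<tau>) = (ci \<circ> \<sigma>) \<circ> \<tau>" by (rule ext) simp
        have rr: "r (ci \<circ> (\<sigma> \<circ> \<tau>)) = pmul p (r (ci \<circ> \<sigma>)) (r \<tau>)"
          unfolding fe using rhom cs t by simp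
        show ?thesis unfolding z_out[OF st] z_out[OF s] z_in[OF t] gact_out[OF pr vr s] rr
          using rG[OF cs] rG[OF t] hG unfolding phi_def by (simp add: ALG)
      next
        assume s: "\<sigma> \<notin> Gal (Qp p)" and t: "\<tau> \<notin> Gal (Qp p)"
        have "(\<sigma> \<circ> \<tau>) a = a" using out_a[OF sG s] out_a[OF tG t] GQ_uminus[OF sG] by simp
        hence st: "\<sigma> \<circ> \<tau> \<in> Gal (Qp p)" using galQ[OF stG] by simp
        have cs: "ci \<circ> \<sigma> \<in> Gal (Qp p)" using ci_out[OF sG s] .
        have ct: "ci \<circ> \<tau> \<in> Gal (Qp p)" using ci_out[OF tG t] .
        have k: "ci \<circ> (ci \<circ> \<sigma>) \<circ> c \<in> Gal (Qp p)" using conj_in[OF cs] .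
        have fe: "\<sigma> \<circ> \<tau> = ((c \<circ> c) \<circ> (ci \<circ> (ci \<circ> \<sigma>) \<circ> c)) \<circ> (ci \<circ> \<tau>)"
          by (rule ext) (simp add: c_ci)
        have rr: "r (\<sigma> \<circ> \<tau>) = pmul p (pmul p (pmul p g g) (pmul p (pinv p g) (pmul p (r (ci \<circ> \<sigma>)) g))) (r (ci \<circ> \<tau>))"
        proof -
          have "r (\<sigma> \<circ> \<tau>) = pmul p (r ((c \<circ> c) \<circ> (ci \<circ> (ci \<circ> \<sigma>) \<circ> c))) (r (ci \<circ> \<tau>))"
            unfolding fe using rhom Gal_comp[OF cc_in k] ct by simp
          also have "r ((c \<circ> c) \<circ> (ci \<circ> (ci \<circ> \<sigma>) \<circ> c)) = pmul p (r (c \<circ> c)) (r (ci \<circ> (ci \<circ> \<sigma>) \<circ> c))"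
            using rhom cc_in k by simp
          also have "r (ci \<circ> (ci \<circ> \<sigma>) \<circ> c) = pmul p (pinv p g) (pmul p (r (ci \<circ> \<sigma>)) g)"
            using rconj cs by blast
          finally show ?thesis by (simp only: rcc)
        qed
        show ?thesis unfolding z_in[OF st] z_out[OF s] z_out[OF t] gact_out[OF pr vr s] rr
          using rG[OF cs] rG[OF ct] gG unfolding h_def phi_def by (simp add: ALG)
      qed
    qed
    have "cocycle p v GQ z" unfolding cocycle_def using zcont zP zco by blast
    moreover have "cohomologous p v (Gal F) z (xi p v \<rho>)"
      unfolding cohomologous_def
    proof (intro bexI[of _ "pone p"] ballI)
      show "pone p \<in> PSL2 p" using PSL2_one[OF pr] .
      fix \<sigma> assume s: "\<sigma> \<in> Gal F"
      have sQ: "\<sigma> \<in> Gal (Qp p)" using s FQ by blast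
      have sG: "\<sigma> \<in> GQ" using sQ GQp by blast
      show "xi p v \<rho> \<sigma> = pmul p (pmul p (pinv p (pone p)) (z \<sigma>)) (gact p v \<sigma> (pone p))"
        unfolding gact_in[OF pr vr sQ pone_closed[OF pr]] xi_F[OF s] z_in[OF sQ]
        using rF s zG[OF sG] z_in[OF sQ] by (simp add: ALG)
    qed
    ultimately show "defined_over_Q p v F \<rho>" unfolding defined_over_Q_def by blast
  qed
qed


end
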